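(* Let $I$ be a finite set and $\{V^{(\tau)}\}_{\tau\in I}$ a family of mixed $\mathbb{R}$-Hodge structures. Let $V=\bigotimes_{\tau\in I}V^{(\tau)}$ (tensor product of $\mathbb{R}$-vector spaces), and for $\tau\in I$ define $$W^\tau_nV=\bigotimes_{\nu\ne\tau}V^{(\nu)}\otimes W_nV^{(\tau)},\qquad F^p_\tau V_{\mathbb{C}}=\bigotimes_{\nu\ne\tau}V^{(\nu)}_{\mathbb{C}}\otimes F^pV^{(\tau)}_{\mathbb{C}}.$$ Then $(V,\{W^\tau_\bullet\}_{\tau\in I},\{F^\bullet_\tau\}_{\tau\in I})$ is an object of $\mathrm{MHS}^{\boxtimes I}_{\mathbb{R}}$.
   Context: $\mathrm{MHS}^{\boxtimes I}_{\mathbb{R}}$ is the category of triples $(V,\{W^\tau_\bullet\}_{\tau\in I},\{F^\bullet_\tau\}_{\tau\in I})$ where $V$ is a finite-dimensional $\mathbb{R}$-vector space, each $W^\tau_\bullet$ is a finite ascending filtration of $V$ by $\mathbb{R}$-subspaces and each $F^\bullet_\tau$ a finite descending filtration of $V_{\mathbb{C}}=V\otimes\mathbb{C}$ by $\mathbb{C}$-subspaces, such that (1) for each $\tau\in I$, $(V,W^\tau_\bullet,F^\bullet_\tau)$ is a mixed $\mathbb{R}$-Hodge structure; (2) for $\tau\ne\nu$ in $I$, the subspaces $W^\nu_nV_{\mathbb{C}}$, $F^m_\nu V_{\mathbb{C}}$ and $\overline{F}^m_\nu V_{\mathbb{C}}$ are mixed $\mathbb{C}$-Hodge structures with respect to the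 filtrations induced by $W^\tau_\bullet$, $F^\bullet_\tau$ and $\overline{F}^\bullet_\tau$. A mixed $\mathbb{R}$-Hodge structure is a triple $(V,W_\bullet,F^\bullet)$ with $\operatorname{Gr}^W_nV_{\mathbb{C}}=\bigoplus_{p+q=n}(F^p\cap\overline{F}^q)\operatorname{Gr}^W_nV_{\mathbb{C}}$ for all $n$. *)

theory Defs
  imports Complex_Main "HOL-Library.Function_Algebras" "HOL-Library.FuncSet"
begin

text \<open>Finite-dimensional vector spaces are modelled by coordinate spaces:
  the vectors supported on a finite basis index set B.  Real vectors have
  values in real, complexified vectors values in complex.\<close>

definition vecs :: "'b set \<Rightarrow> ('b \<Rightarrow> 'a::zero) set" where
  "vecs B = {v. \<forall>x. x \<notin> B \<longrightarrow> v x = 0}"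

definition is_subspace :: "'b set \<Rightarrow> ('b \<Rightarrow> 'a::field) set \<Rightarrow> bool" where
  "is_subspace B S \<longleftrightarrow> S \<subseteq> vecs B \<and> 0 \<in> S \<and> (\<forall>x\<in>S. \<forall>y\<in>S. x + y \<in> S)
     \<and> (\<forall>c::'a. \<forall>x\<in>S. (\<lambda>k. c * x k) \<in> S)"

definition lspan :: "('c \<Rightarrow> 'a::field) set \<Rightarrow> ('c \<Rightarrow> 'a) set" where
  "lspan S = {x. \<exists>A c. finite A \<and> A \<subseteq> S \<and> x = (\<lambda>k. \<Sum>a\<in>A. c a * a k)}"

definition cplx :: "('b \<Rightarrow> real) set \<Rightarrow> ('b \<Rightarrow> complex) set" where
  "cplx S = {w. \<exists>u\<in>S. \<exists>v\<in>S. w = (\<lambda>k. complex_of_real (u k) + \<i> * complex_of_real (v k))}"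

definition conj_set :: "('b \<Rightarrow> complex) set \<Rightarrow> ('b \<Rightarrow> complex) set" where
  "conj_set S = (\<lambda>v k. cnj (v k)) ` S"

definition asc_filt :: "(('b \<Rightarrow> 'a::zero) set \<Rightarrow> bool) \<Rightarrow> ('b \<Rightarrow> 'a) set \<Rightarrow> (int \<Rightarrow> ('b \<Rightarrow> 'a) set) \<Rightarrow> bool" where
  "asc_filt sub V W \<longleftrightarrow> (\<forall>n. sub (W n) \<and> W n \<subseteq> V) \<and> (\<forall>n m. n \<le> m \<longrightarrow> W n \<subseteq> W m)
     \<and> (\<exists>a b. W a = {0} \<and> W b = V)"

definition desc_filt :: "(('b \<Rightarrow> 'a::zero) set \<Rightarrow> bool) \<Rightarrow> ('b \<Rightarrow> 'a) set \<Rightarrow> (int \<Rightarrow> ('b \<Rightarrow> 'a) set) \<Rightarrow> bool" where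
  "desc_filt sub V F \<longleftrightarrow> (\<forall>p. sub (F p) \<and> F p \<subseteq> V) \<and> (\<forall>p q. p \<le> q \<longrightarrow> F q \<subseteq> F p)
     \<and> (\<exists>a b. F a = V \<and> F b = {0})"

text \<open>Gr_n = Wn / Wm (Wm = W_{n-1}) equals the direct sum over p+q=n of
  (F^p \<inter> G^q) Gr_n, where F^p Gr_n is the image (F^p \<inter> Wn + Wm)/Wm;
  the quotient is unfolded explicitly.\<close>
definition hodge_split :: "('b \<Rightarrow> complex) set \<Rightarrow> ('b \<Rightarrow> complex) set \<Rightarrow> (int \<Rightarrow> ('b \<Rightarrow> complex) set)
    \<Rightarrow> (int \<Rightarrow> ('b \<Rightarrow> complex) set) \<Rightarrow> int \<Rightarrow> bool" where
  "hodge_split Wn Wm F G n \<longleftrightarrow>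
     (let H = (\<lambda>p. {x + y | x y. x \<in> F p \<inter> Wn \<and> y \<in> Wm} \<inter> {x + y | x y. x \<in> G (n - p) \<inter> Wn \<and> y \<in> Wm}) in
      (\<forall>x\<in>Wn. \<exists>P h. finite P \<and> (\<forall>p\<in>P. h p \<in> H p) \<and> x - (\<Sum>p\<in>P. h p) \<in> Wm) \<and>
      (\<forall>P h. finite P \<and> (\<forall>p\<in>P. h p \<in> H p) \<and> (\<Sum>p\<in>P. h p) \<in> Wm \<longrightarrow> (\<forall>p\<in>P. h p \<in> Wm)))"

definition mixed_C_HS :: "'b set \<Rightarrow> ('b \<Rightarrow> complex) set \<Rightarrow> (int \<Rightarrow> ('b \<Rightarrow> complex) set)
    \<Rightarrow> (int \<Rightarrow> ('b \<Rightarrow> complex) set) \<Rightarrow> (int \<Rightarrow> ('b \<Rightarrow> complex) set) \<Rightarrow> bool" where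
  "mixed_C_HS B U W F G \<longleftrightarrow> finite B \<and> is_subspace B U \<and> asc_filt (is_subspace B) U W
     \<and> desc_filt (is_subspace B) U F \<and> desc_filt (is_subspace B) U G
     \<and> (\<forall>n. hodge_split (W n) (W (n - 1)) F G n)"

definition mixed_R_HS :: "'b set \<Rightarrow> (int \<Rightarrow> ('b \<Rightarrow> real) set) \<Rightarrow> (int \<Rightarrow> ('b \<Rightarrow> complex) set) \<Rightarrow> bool" where
  "mixed_R_HS B W F \<longleftrightarrow> finite B \<and> asc_filt (is_subspace B) (vecs B) W
     \<and> desc_filt (is_subspace B) (vecs B) F
     \<and> (\<forall>n. hodge_split (cplx (W n)) (cplx (W (n - 1))) F (\<lambda>q. conj_set (F q)) n)"

definition MHS_box :: "'i set \<Rightarrow> 'b set \<Rightarrow> ('i \<Rightarrow> int \<Rightarrow> ('b \<Rightarrow> real) set)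
    \<Rightarrow> ('i \<Rightarrow> int \<Rightarrow> ('b \<Rightarrow> complex) set) \<Rightarrow> bool" where
  "MHS_box I B W F \<longleftrightarrow> finite B \<and> (\<forall>\<tau>\<in>I. mixed_R_HS B (W \<tau>) (F \<tau>)) \<and>
     (\<forall>\<tau>\<in>I. \<forall>\<nu>\<in>I. \<tau> \<noteq> \<nu> \<longrightarrow>
        (\<forall>U \<in> range (\<lambda>n. cplx (W \<nu> n)) \<union> range (F \<nu>) \<union> range (\<lambda>m. conj_set (F \<nu> m)).
           mixed_C_HS B U (\<lambda>k. cplx (W \<tau> k) \<inter> U) (\<lambda>p. F \<tau> p \<inter> U) (\<lambda>q. conj_set (F \<tau> q) \<inter> U)))"

text \<open>Tensor product of coordinate spaces: coordinates indexed by PiE I B.\<close>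
definition ptensor :: "'i set \<Rightarrow> ('i \<Rightarrow> 'b set) \<Rightarrow> ('i \<Rightarrow> 'b \<Rightarrow> 'a::comm_ring_1) \<Rightarrow> ('i \<Rightarrow> 'b) \<Rightarrow> 'a" where
  "ptensor I B v k = (if k \<in> PiE I B then (\<Prod>\<tau>\<in>I. v \<tau> (k \<tau>)) else 0)"

definition tensor_W :: "'i set \<Rightarrow> ('i \<Rightarrow> 'b set) \<Rightarrow> ('i \<Rightarrow> int \<Rightarrow> ('b \<Rightarrow> real) set)
    \<Rightarrow> 'i \<Rightarrow> int \<Rightarrow> (('i \<Rightarrow> 'b) \<Rightarrow> real) set" where
  "tensor_W I B W \<tau> n = lspan {ptensor I B v | v. \<forall>\<nu>\<in>I. v \<nu> \<in> (if \<nu> = \<tau> then W \<tau> n else vecs (B \<nu>))}"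

definition tensor_F :: "'i set \<Rightarrow> ('i \<Rightarrow> 'b set) \<Rightarrow> ('i \<Rightarrow> int \<Rightarrow> ('b \<Rightarrow> complex) set)
    \<Rightarrow> 'i \<Rightarrow> int \<Rightarrow> (('i \<Rightarrow> 'b) \<Rightarrow> complex) set" where
  "tensor_F I B F \<tau> p = lspan {ptensor I B v | v. \<forall>\<nu>\<in>I. v \<nu> \<in> (if \<nu> = \<tau> then F \<tau> p else vecs (B \<nu>))}"

end

theory Submission
  imports Defs
begin

definition fscale :: "'a::field \<Rightarrow> ('b \<Rightarrow> 'a) \<Rightarrow> ('b \<Rightarrow> 'a)" where
  "fscale c v = (\<lambda>k. c * v k)"

lemma vs_fscale: "vector_space (fscale :: 'a::field \<Rightarrow> ('b \<Rightarrow> 'a) \<Rightarrow> ('b \<Rightarrow> 'a))"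
  by unfold_locales (auto simp: fscale_def algebra_simps)

lemma sum_fun_apply: "(\<Sum>p\<in>P. h p) x = (\<Sum>p\<in>P. h p x)"
  by (induction P rule: infinite_finite_induct) auto

lemma proj_exists:
  fixes X :: "('b \<Rightarrow> 'a::field) set"
  assumes "0 \<in> X" "\<forall>x\<in>X. \<forall>y\<in>X. x+y\<in>X" "\<forall>c. \<forall>x\<in>X. (\<lambda>k. c * x k) \<in> X"
  shows "\<exists>\<pi>. (\<forall>x y. \<pi> (x+y) = \<pi> x + \<pi> y) \<and> (\<forall>c x. \<pi> (\<lambda>k. c * x k) = (\<lambda>k. c * \<pi> x k))
     \<and> (\<forall>x. \<pi> x \<in> X) \<and> (\<forall>x\<in>X. \<pi> x = x)"
proof -
  interpret vs: vector_space "fscale :: 'a::field \<Rightarrow> ('b \<Rightarrow> 'a) \<Rightarrow> ('b \<Rightarrow> 'a)" by (rule vs_fscale)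
  interpret vp: vector_space_pair "fscale :: 'a::field \<Rightarrow> ('b \<Rightarrow> 'a) \<Rightarrow> ('b \<Rightarrow> 'a)" fscale
    by (simp add: vector_space_pair_def vs_fscale)
  have sub: "vs.subspace X" using assms unfolding vs.subspace_def fscale_def by auto
  obtain Bx where Bx: "Bx \<subseteq> X" "vs.independent Bx" "X \<subseteq> vs.span Bx"
    using vs.maximal_independent_subset by blast
  have spanX: "vs.span Bx = X" using Bx sub vs.span_minimal by blast
  define \<pi> where "\<pi> = vp.construct Bx id"
  have lin: "Vector_Spaces.linear fscale fscale \<pi>" unfolding \<pi>_def by (rule vp.linear_construct[OF Bx(2)])
  have linid: "Vector_Spaces.linear fscale fscale (id :: ('b \<Rightarrow> 'a) \<Rightarrow> _)"
    by (simp add: vs.linear_id)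
  have 1: "\<pi> (x+y) = \<pi> x + \<pi> y" for x y
    using lin by (simp add: Vector_Spaces.linear_iff)
  have 2: "\<pi> (\<lambda>k. c * x k) = (\<lambda>k. c * \<pi> x k)" for c x
    using lin by (simp add: Vector_Spaces.linear_iff fscale_def)
  have 3: "\<pi> x \<in> X" for x
    using vp.construct_in_span[OF Bx(2), of id x] spanX unfolding \<pi>_def by simp
  have 4: "\<pi> x = x" if "x \<in> X" for x
    using vp.linear_eq_on[OF lin linid, of x Bx] that spanX
    by (simp add: \<pi>_def vp.construct_basis[OF Bx(2)])
  show ?thesis using 1 2 3 4 by blast
qed

definition slice :: "('i \<Rightarrow> 'b set) \<Rightarrow> 'i \<Rightarrow> (('i \<Rightarrow> 'b) \<Rightarrow> 'a::zero) \<Rightarrow> ('i \<Rightarrow> 'b) \<Rightarrow> 'b \<Rightarrow> 'a" where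
  "slice B \<nu> f k = (\<lambda>b. if b \<in> B \<nu> then f (k(\<nu> := b)) else 0)"

definition TS :: "'i set \<Rightarrow> ('i \<Rightarrow> 'b set) \<Rightarrow> ('i \<Rightarrow> ('b \<Rightarrow> 'a::zero) set) \<Rightarrow> (('i \<Rightarrow> 'b) \<Rightarrow> 'a) set" where
  "TS I B X = {f \<in> vecs (PiE I B). \<forall>\<nu>\<in>I. \<forall>k\<in>PiE I B. slice B \<nu> f k \<in> X \<nu>}"

definition lc :: "('c \<Rightarrow> 'a::field) set \<Rightarrow> bool" where
  "lc Z \<longleftrightarrow> 0 \<in> Z \<and> (\<forall>x\<in>Z. \<forall>y\<in>Z. x + y \<in> Z) \<and> (\<forall>c. \<forall>x\<in>Z. (\<lambda>k. c * x k) \<in> Z)"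

lemma is_subspace_lc: "is_subspace B S \<longleftrightarrow> S \<subseteq> vecs B \<and> lc S"
  unfolding is_subspace_def lc_def by auto

lemma lc_lincomb:
  assumes "lc Z" "\<forall>a\<in>A. g a \<in> Z"
  shows "(\<lambda>k. \<Sum>a\<in>A. c a * g a k) \<in> Z"
proof (cases "finite A")
  case True
  have z: "0 \<in> Z" and ad: "\<And>x y. x \<in> Z \<Longrightarrow> y \<in> Z \<Longrightarrow> x + y \<in> Z"
    and sc: "\<And>c x. x \<in> Z \<Longrightarrow> (\<lambda>k. c * x k) \<in> Z" using assms(1) unfolding lc_def by blast+
  show ?thesis using True assms(2)
  proof (induction A rule: finite_induct)
    case empty
    have "(\<lambda>k. \<Sum>a\<in>{}. c a * g a k) = 0" by (simp add: zero_fun_def)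
    then show ?case using z by simp
  next
    case (insert x F)
    have e: "(\<lambda>k. \<Sum>a\<in>insert x F. c a * g a k) = (\<lambda>k. c x * g x k) + (\<lambda>k. \<Sum>a\<in>F. c a * g a k)"
      using insert(1,2) by (simp add: plus_fun_def)
    have "(\<lambda>k. c x * g x k) \<in> Z" using sc insert(4) by simp
    moreover have "(\<lambda>k. \<Sum>a\<in>F. c a * g a k) \<in> Z" using insert(3,4) by simp
    ultimately show ?case unfolding e by (rule ad)
  qed
next
  case False
  have "(\<lambda>k. \<Sum>a\<in>A. c a * g a k) = 0" using False by (simp add: zero_fun_def)
  then show ?thesis using assms(1) by (simp add: lc_def)
qed

lemma lspan_sub: "lc Z \<Longrightarrow> S \<subseteq> Z \<Longrightarrow> lspan S \<subseteq> Z"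
proof
  fix x assume a: "lc Z" "S \<subseteq> Z" "x \<in> lspan S"
  then obtain A c where "finite A" "A \<subseteq> S" "x = (\<lambda>k. \<Sum>a\<in>A. c a * a k)" unfolding lspan_def by blast
  then show "x \<in> Z" using lc_lincomb[OF a(1), of A "\<lambda>a. a" c] a(2) by auto
qed

lemma lspan_mono: "S \<subseteq> S' \<Longrightarrow> lspan S \<subseteq> lspan S'"
  unfolding lspan_def by blast

lemma slice_add:
  fixes f g :: "('i \<Rightarrow> 'b) \<Rightarrow> 'a::field" and B :: "'i \<Rightarrow> 'b set" shows "slice B \<nu> (f + g) k = slice B \<nu> f k + slice B \<nu> g k"
  by (auto simp: slice_def fun_eq_iff)

lemma slice_diff:
  fixes f g :: "('i \<Rightarrow> 'b) \<Rightarrow> 'a::field" and B :: "'i \<Rightarrow> 'b set" shows "slice B \<nu> (f - g) k = slice B \<nu> f k - slice B \<nu> g k"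
  by (auto simp: slice_def fun_eq_iff)

lemma slice_zero:
  fixes f g :: "('i \<Rightarrow> 'b) \<Rightarrow> 'a::field" and B :: "'i \<Rightarrow> 'b set" shows "slice B \<nu> 0 k = 0"
  by (auto simp: slice_def)

lemma slice_scale:
  fixes f g :: "('i \<Rightarrow> 'b) \<Rightarrow> 'a::field" and B :: "'i \<Rightarrow> 'b set" shows "slice B \<nu> (\<lambda>k. c * f k) k = (\<lambda>b. c * slice B \<nu> f k b)"
  by (auto simp: slice_def fun_eq_iff)

lemma slice_lincomb:
  fixes g :: "'c \<Rightarrow> ('i \<Rightarrow> 'b) \<Rightarrow> 'a::field" and B :: "'i \<Rightarrow> 'b set" shows "slice B \<nu> (\<lambda>k. \<Sum>a\<in>A. c a * g a k) k = (\<lambda>b. \<Sum>a\<in>A. c a * slice B \<nu> (g a) k b)"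
  by (auto simp: slice_def fun_eq_iff)

lemma slice_sum:
  fixes g :: "'c \<Rightarrow> ('i \<Rightarrow> 'b) \<Rightarrow> 'a::field" and B :: "'i \<Rightarrow> 'b set" shows "slice B \<nu> (\<Sum>a\<in>A. g a) k = (\<Sum>a\<in>A. slice B \<nu> (g a) k)"
  by (auto simp: slice_def sum_fun_apply fun_eq_iff)

lemma slice_vecs: "slice B \<nu> f k \<in> vecs (B \<nu>)"
  by (auto simp: slice_def vecs_def)

lemma TS_lc:
  assumes "\<forall>\<nu>\<in>I. lc (X \<nu>)"
  shows "lc (TS I B X)"
  using assms unfolding lc_def TS_def
  by (auto simp: slice_add slice_zero slice_scale vecs_def)

lemma TS_subspace:
  assumes "\<forall>\<nu>\<in>I. is_subspace (B \<nu>) (X \<nu>)"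
  shows "is_subspace (PiE I B) (TS I B X)"
  using TS_lc[of I X B] assms unfolding is_subspace_lc TS_def by auto

lemma ptensor_split:
  assumes "finite I" "\<tau> \<in> I"
  shows "ptensor I B v k = (if k \<in> PiE I B then v \<tau> (k \<tau>) * (\<Prod>\<mu>\<in>I-{\<tau>}. v \<mu> (k \<mu>)) else 0)"
  unfolding ptensor_def using prod.remove[OF assms, of "\<lambda>\<mu>. v \<mu> (k \<mu>)"] by simp

lemma slice_ptensor:
  assumes "finite I" "\<nu> \<in> I" "v \<nu> \<in> vecs (B \<nu>)" "k \<in> PiE I B"
  shows "slice B \<nu> (ptensor I B v) k = (\<lambda>b. (\<Prod>\<mu>\<in>I-{\<nu>}. v \<mu> (k \<mu>)) * v \<nu> b)"
proof
  fix b
  show "slice B \<nu> (ptensor I B v) k b = (\<Prod>\<mu>\<in>I-{\<nu>}. v \<mu> (k \<mu>)) * v \<nu> b"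
  proof (cases "b \<in> B \<nu>")
    case True
    have kb: "k(\<nu> := b) \<in> PiE I B" using assms True by (auto simp: PiE_iff extensional_def)
    have pr: "(\<Prod>\<mu>\<in>I-{\<nu>}. v \<mu> ((k(\<nu> := b)) \<mu>)) = (\<Prod>\<mu>\<in>I-{\<nu>}. v \<mu> (k \<mu>))"
      by (rule prod.cong) auto
    have "slice B \<nu> (ptensor I B v) k b = ptensor I B v (k(\<nu> := b))"
      using True by (simp add: slice_def)
    also have "\<dots> = v \<nu> b * (\<Prod>\<mu>\<in>I-{\<nu>}. v \<mu> ((k(\<nu> := b)) \<mu>))"
      using ptensor_split[OF assms(1,2), of B v "k(\<nu> := b)"] kb by simp
    finally show ?thesis unfolding pr by (simp add: mult.commute)
  next
    case False
    then show ?thesis using assms(3) by (simp add: slice_def vecs_def)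
  qed
qed

lemma ptensor_vecs: "ptensor I B v \<in> vecs (PiE I B)"
  by (simp add: ptensor_def vecs_def)

lemma ptensor_TS:
  assumes "finite I" "\<forall>\<nu>\<in>I. is_subspace (B \<nu>) (X \<nu>)" "\<forall>\<nu>\<in>I. v \<nu> \<in> X \<nu>"
  shows "ptensor I B v \<in> TS I B X"
  unfolding TS_def
proof (safe intro!: ptensor_vecs)
  fix \<nu> k assume a: "\<nu> \<in> I" "k \<in> PiE I B"
  have "v \<nu> \<in> vecs (B \<nu>)" using assms a unfolding is_subspace_def by blast
  have sub: "is_subspace (B \<nu>) (X \<nu>)" "v \<nu> \<in> X \<nu>" using assms a by auto
  show "slice B \<nu> (ptensor I B v) k \<in> X \<nu>"
    unfolding slice_ptensor[where I=I and \<nu>=\<nu> and v=v and B=B and k=k, OF assms(1) a(1) \<open>v \<nu> \<in> vecs (B \<nu>)\<close> a(2)]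
  proof -
    have "\<forall>c. \<forall>x\<in>X \<nu>. (\<lambda>k. c * x k) \<in> X \<nu>" using sub(1) unfolding is_subspace_def by simp
    then show "(\<lambda>b. (\<Prod>\<mu>\<in>I-{\<nu>}. v \<mu> (k \<mu>)) * v \<nu> b) \<in> X \<nu>" using sub(2) by blast
  qed
qed

lemma lspanI: "finite A \<Longrightarrow> A \<subseteq> S \<Longrightarrow> x = (\<lambda>k. \<Sum>a\<in>A. c a * a k) \<Longrightarrow> x \<in> lspan S"
  unfolding lspan_def by auto

lemma lspanE:
  assumes "x \<in> lspan S"
  obtains A c where "finite A" "A \<subseteq> S" "x = (\<lambda>k. \<Sum>a\<in>A. c a * a k)"
  using assms unfolding lspan_def by auto

lemma lc_lspan: "lc (lspan (S :: ('c \<Rightarrow> 'a::field) set))"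
  unfolding lc_def
proof (intro conjI ballI allI)
  show "0 \<in> lspan S" unfolding lspan_def
    by (rule CollectI, rule exI[of _ "{}"], rule exI[of _ "\<lambda>_. 0"]) (simp add: zero_fun_def)
next
  fix x y assume xy: "x \<in> lspan S" "y \<in> lspan S"
  obtain A1 c1 where a1: "finite A1" "A1 \<subseteq> S" "x = (\<lambda>k. \<Sum>a\<in>A1. c1 a * a k)"
    using xy(1) by (rule lspanE)
  obtain A2 c2 where a2: "finite A2" "A2 \<subseteq> S" "y = (\<lambda>k. \<Sum>a\<in>A2. c2 a * a k)"
    using xy(2) by (rule lspanE)
  note a = a1 a2
  define c where "c a = (if a \<in> A1 then c1 a else 0) + (if a \<in> A2 then c2 a else 0)" for a
  have "(\<lambda>k. \<Sum>a\<in>A1 \<union> A2. c a * a k) = x + y"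
  proof
    fix k
    have "(\<Sum>a\<in>A1 \<union> A2. c a * a k) = (\<Sum>a\<in>A1 \<union> A2. (if a \<in> A1 then c1 a * a k else 0))
         + (\<Sum>a\<in>A1 \<union> A2. (if a \<in> A2 then c2 a * a k else 0))"
      unfolding sum.distrib[symmetric] by (rule sum.cong) (auto simp: c_def algebra_simps)
    also have "\<dots> = (\<Sum>a\<in>A1. c1 a * a k) + (\<Sum>a\<in>A2. c2 a * a k)"
    proof -
      have f: "finite (A1 \<union> A2)" using a(1,4) by simp
      have "(A1 \<union> A2) \<inter> A1 = A1" "(A1 \<union> A2) \<inter> A2 = A2" by auto
      then show ?thesis using sum.inter_restrict[OF f, of "\<lambda>a. c1 a * a k" A1]
        sum.inter_restrict[OF f, of "\<lambda>a. c2 a * a k" A2] by simp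
    qed
    finally show "(\<Sum>a\<in>A1 \<union> A2. c a * a k) = (x + y) k" using a(3,6) by simp
  qed
  then show "x + y \<in> lspan S" using a by (intro lspanI[of "A1 \<union> A2" S _ c]) auto
next
  fix d x assume "x \<in> lspan S"
  then obtain A c where a: "finite A" "A \<subseteq> S" "x = (\<lambda>k. \<Sum>a\<in>A. c a * a k)"
    by (rule lspanE)
  have "(\<lambda>k. d * x k) = (\<lambda>k. \<Sum>a\<in>A. (d * c a) * a k)"
    using a(3) by (simp add: sum_distrib_left mult.assoc)
  then show "(\<lambda>k. d * x k) \<in> lspan S" using a by (intro lspanI[of A S _ "\<lambda>a. d * c a"]) auto
qed

lemma lspan_base: "x \<in> S \<Longrightarrow> x \<in> lspan (S :: ('c \<Rightarrow> 'a::field) set)"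
  unfolding lspan_def
  by (rule CollectI, rule exI[of _ "{x}"], rule exI[of _ "\<lambda>_. 1"]) simp

definition Qop :: "'i set \<Rightarrow> ('i \<Rightarrow> 'b set) \<Rightarrow> 'i \<Rightarrow> (('b \<Rightarrow> 'a) \<Rightarrow> ('b \<Rightarrow> 'a))
     \<Rightarrow> (('i \<Rightarrow> 'b) \<Rightarrow> 'a::field) \<Rightarrow> ('i \<Rightarrow> 'b) \<Rightarrow> 'a" where
  "Qop I B \<nu> \<pi> f = (\<lambda>k. if k \<in> PiE I B then \<pi> (slice B \<nu> f k) (k \<nu>) else 0)"

lemma pi_lincomb:
  fixes \<pi> :: "('b \<Rightarrow> 'a::field) \<Rightarrow> ('b \<Rightarrow> 'a)"
  assumes add: "\<forall>x y. \<pi> (x+y) = \<pi> x + \<pi> y" and hom: "\<forall>c x. \<pi> (\<lambda>k. c * x k) = (\<lambda>k. c * \<pi> x k)"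
  shows "\<pi> (\<lambda>b. \<Sum>a\<in>A. c a * s a b) = (\<lambda>b. \<Sum>a\<in>A. c a * \<pi> (s a) b)"
proof -
  have z: "\<pi> (\<lambda>b. 0) = (\<lambda>b. 0)"
    using hom[rule_format, of 0 "\<lambda>b. 0"] by simp
  show ?thesis
  proof (induction A rule: infinite_finite_induct)
    case (infinite A) then show ?case using z by simp
  next
    case empty then show ?case using z by simp
  next
    case (insert x F)
    have "(\<lambda>b. \<Sum>a\<in>insert x F. c a * s a b) = (\<lambda>b. c x * s x b) + (\<lambda>b. \<Sum>a\<in>F. c a * s a b)"
      using insert(1,2) by (simp add: plus_fun_def)
    then have "\<pi> (\<lambda>b. \<Sum>a\<in>insert x F. c a * s a b) = (\<lambda>b. c x * \<pi> (s x) b) + (\<lambda>b. \<Sum>a\<in>F. c a * \<pi> (s a) b)"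
      using add hom insert(3) by simp
    then show ?case using insert(1,2) by (simp add: plus_fun_def)
  qed
qed

lemma Q_fix:
  assumes "\<nu> \<in> I" "f \<in> vecs (PiE I B)" "\<forall>k\<in>PiE I B. slice B \<nu> f k \<in> X" "\<forall>x\<in>X. \<pi> x = x"
  shows "Qop I B \<nu> \<pi> f = f"
proof
  fix k show "Qop I B \<nu> \<pi> f k = f k"
  proof (cases "k \<in> PiE I B")
    case True
    then have "k \<nu> \<in> B \<nu>" using assms(1) by auto
    then show ?thesis using True assms(3,4) by (simp add: Qop_def slice_def)
  next
    case False then show ?thesis using assms(2) by (simp add: Qop_def vecs_def)
  qed
qed

lemma Q_lincomb:
  fixes \<pi> :: "('b \<Rightarrow> 'a::field) \<Rightarrow> ('b \<Rightarrow> 'a)"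
  assumes add: "\<forall>x y. \<pi> (x+y) = \<pi> x + \<pi> y" and hom: "\<forall>c x. \<pi> (\<lambda>k. c * x k) = (\<lambda>k. c * \<pi> x k)"
  shows "Qop I B \<nu> \<pi> (\<lambda>k. \<Sum>a\<in>A. c a * g a k) = (\<lambda>k. \<Sum>a\<in>A. c a * Qop I B \<nu> \<pi> (g a) k)"
  unfolding Qop_def slice_lincomb pi_lincomb[OF add hom] by auto

lemma Q_ptensor:
  fixes \<pi> :: "('b \<Rightarrow> 'a::field) \<Rightarrow> ('b \<Rightarrow> 'a)"
  assumes hom: "\<forall>c x. \<pi> (\<lambda>k. c * x k) = (\<lambda>k. c * \<pi> x k)"
    and "finite I" "\<nu> \<in> I" "v \<nu> \<in> vecs (B \<nu>)"
  shows "Qop I B \<nu> \<pi> (ptensor I B v) = ptensor I B (v(\<nu> := \<pi> (v \<nu>)))"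
proof
  fix k show "Qop I B \<nu> \<pi> (ptensor I B v) k = ptensor I B (v(\<nu> := \<pi> (v \<nu>))) k"
  proof (cases "k \<in> PiE I B")
    case True
    have pr: "(\<Prod>\<mu>\<in>I-{\<nu>}. (v(\<nu> := \<pi> (v \<nu>))) \<mu> (k \<mu>)) = (\<Prod>\<mu>\<in>I-{\<nu>}. v \<mu> (k \<mu>))"
      by (rule prod.cong) auto
    have "Qop I B \<nu> \<pi> (ptensor I B v) k = \<pi> (\<lambda>b. (\<Prod>\<mu>\<in>I-{\<nu>}. v \<mu> (k \<mu>)) * v \<nu> b) (k \<nu>)"
      using True by (simp add: Qop_def slice_ptensor[where I=I and \<nu>=\<nu> and v=v and B=B and k=k, OF assms(2,3,4) True])
    also have "\<dots> = (\<Prod>\<mu>\<in>I-{\<nu>}. v \<mu> (k \<mu>)) * \<pi> (v \<nu>) (k \<nu>)"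
      using hom by simp
    also have "\<dots> = ptensor I B (v(\<nu> := \<pi> (v \<nu>))) k"
      unfolding ptensor_split[OF assms(2,3), of B _ k] pr using True by (simp add: mult.commute)
    finally show ?thesis .
  next
    case False then show ?thesis by (simp add: Qop_def ptensor_def)
  qed
qed

lemma Q_lspan:
  fixes \<pi> :: "('b \<Rightarrow> 'a::field) \<Rightarrow> ('b \<Rightarrow> 'a)"
  assumes add: "\<forall>x y. \<pi> (x+y) = \<pi> x + \<pi> y" and hom: "\<forall>c x. \<pi> (\<lambda>k. c * x k) = (\<lambda>k. c * \<pi> x k)"
    and "x \<in> lspan S" "\<forall>s\<in>S. Qop I B \<nu> \<pi> s \<in> T"
  shows "Qop I B \<nu> \<pi> x \<in> lspan T"
proof -
  obtain A c where a: "finite A" "A \<subseteq> S" "x = (\<lambda>k. \<Sum>a\<in>A. c a * a k)"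
    using assms(3) by (rule lspanE)
  have "Qop I B \<nu> \<pi> x = (\<lambda>k. \<Sum>a\<in>A. c a * Qop I B \<nu> \<pi> a k)"
    unfolding a(3) by (rule Q_lincomb[OF add hom])
  also have "\<dots> \<in> lspan T"
    by (rule lc_lincomb[OF lc_lspan]) (use a(2) assms(4) lspan_base in blast)
  finally show ?thesis .
qed

lemma prod_indicator:
  assumes "finite I"
  shows "(\<Prod>\<mu>\<in>I. if P \<mu> then (1::'a::comm_ring_1) else 0) = (if \<forall>\<mu>\<in>I. P \<mu> then 1 else 0)"
proof (cases "\<forall>\<mu>\<in>I. P \<mu>")
  case True then show ?thesis by simp
next
  case False
  then obtain \<mu> where "\<mu> \<in> I" "\<not> P \<mu>" by blast
  then show ?thesis using assms False by (subst prod_zero) auto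
qed

lemma delta_expand:
  fixes f :: "('i \<Rightarrow> 'b) \<Rightarrow> 'a::field"
  assumes "finite I" "\<forall>\<nu>\<in>I. finite (B \<nu>)" "f \<in> vecs (PiE I B)"
  shows "f \<in> lspan {ptensor I B v | v. \<forall>\<nu>\<in>I. v \<nu> \<in> vecs (B \<nu>)}"
proof -
  define D where "D j = ptensor I B (\<lambda>\<mu> b. if b = j \<mu> then (1::'a) else 0)" for j
  have fin: "finite (PiE I B)" using assms by (simp add: finite_PiE)
  have Dval: "D j k = (if k = j then 1 else 0)" if j: "j \<in> PiE I B" for j k
  proof (cases "k \<in> PiE I B")
    case True
    have "(\<forall>\<mu>\<in>I. k \<mu> = j \<mu>) \<longleftrightarrow> k = j"
    proof
      assume "\<forall>\<mu>\<in>I. k \<mu> = j \<mu>"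
      then show "k = j" using True j by (metis PiE_E ext)
    qed simp
    then show ?thesis using True prod_indicator[OF assms(1), of "\<lambda>\<mu>. k \<mu> = j \<mu>"]
      by (simp add: D_def ptensor_def)
  next
    case False
    then have "k \<noteq> j" using j by auto
    then show ?thesis using False by (simp add: D_def ptensor_def)
  qed
  have inj: "inj_on D (PiE I B)"
  proof (rule inj_onI)
    fix i j assume ij: "i \<in> PiE I B" "j \<in> PiE I B" "D i = D j"
    then have "D i i = D j i" by simp
    then show "i = j" using Dval[OF ij(1), of i] Dval[OF ij(2), of i] by (auto split: if_splits)
  qed
  have fe: "f = (\<lambda>k. \<Sum>j\<in>PiE I B. f j * D j k)"
  proof
    fix k
    have "(\<Sum>j\<in>PiE I B. f j * D j k) = (\<Sum>j\<in>PiE I B. if k = j then f j else 0)"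
      by (rule sum.cong) (auto simp: Dval)
    also have "\<dots> = (if k \<in> PiE I B then f k else 0)"
      using fin by simp
    also have "\<dots> = f k" using assms(3) by (simp add: vecs_def)
    finally show "f k = (\<Sum>j\<in>PiE I B. f j * D j k)" by simp
  qed
  define c where "c d = f (inv_into (PiE I B) D d)" for d
  have "(\<lambda>k. \<Sum>d\<in>D ` PiE I B. c d * d k) = (\<lambda>k. \<Sum>j\<in>PiE I B. c (D j) * D j k)"
    by (simp add: sum.reindex[OF inj])
  also have "\<dots> = (\<lambda>k. \<Sum>j\<in>PiE I B. f j * D j k)"
    by (simp add: c_def inv_into_f_f[OF inj])
  finally have e: "f = (\<lambda>k. \<Sum>d\<in>D ` PiE I B. c d * d k)" using fe by simp
  have sub: "D ` PiE I B \<subseteq> {ptensor I B v | v. \<forall>\<nu>\<in>I. v \<nu> \<in> vecs (B \<nu>)}"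
  proof
    fix d assume "d \<in> D ` PiE I B"
    then obtain j where j: "j \<in> PiE I B" "d = D j" by blast
    have "\<forall>\<nu>\<in>I. (\<lambda>b. if b = j \<nu> then (1::'a) else 0) \<in> vecs (B \<nu>)"
      using j(1) by (auto simp: vecs_def)
    then show "d \<in> {ptensor I B v | v. \<forall>\<nu>\<in>I. v \<nu> \<in> vecs (B \<nu>)}"
      unfolding j(2) D_def by blast
  qed
  show ?thesis by (rule lspanI[OF _ sub e]) (use fin in simp)
qed

lemma KEY_sub:
  fixes X :: "'i \<Rightarrow> ('b \<Rightarrow> 'a::field) set"
  assumes fin: "finite I" "\<forall>\<nu>\<in>I. finite (B \<nu>)" and sub: "\<forall>\<nu>\<in>I. is_subspace (B \<nu>) (X \<nu>)"
  shows "TS I B X \<subseteq> lspan {ptensor I B v | v. \<forall>\<nu>\<in>I. v \<nu> \<in> X \<nu>}"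
proof -
  have "\<forall>\<nu>\<in>I. \<exists>\<pi>. (\<forall>x y. \<pi> (x+y) = \<pi> x + \<pi> y) \<and> (\<forall>c x. \<pi> (\<lambda>k. c * x k) = (\<lambda>k. c * \<pi> x k))
     \<and> (\<forall>x. \<pi> x \<in> X \<nu>) \<and> (\<forall>x\<in>X \<nu>. \<pi> x = x)" (is "\<forall>\<nu>\<in>I. \<exists>\<pi>. ?Pr \<nu> \<pi>")
  proof
    fix \<nu> assume "\<nu> \<in> I"
    then have "is_subspace (B \<nu>) (X \<nu>)" using sub by blast
    then show "\<exists>\<pi>. (\<forall>x y. \<pi> (x+y) = \<pi> x + \<pi> y) \<and> (\<forall>c x. \<pi> (\<lambda>k. c * x k) = (\<lambda>k. c * \<pi> x k))
     \<and> (\<forall>x. \<pi> x \<in> X \<nu>) \<and> (\<forall>x\<in>X \<nu>. \<pi> x = x)"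
      unfolding is_subspace_def by (intro proj_exists) auto
  qed
  note ex = this
  obtain P where P: "\<forall>\<nu>\<in>I. (\<forall>x y. P \<nu> (x+y) = P \<nu> x + P \<nu> y) \<and> (\<forall>c x. P \<nu> (\<lambda>k. c * x k) = (\<lambda>k. c * P \<nu> x k))
     \<and> (\<forall>x. P \<nu> x \<in> X \<nu>) \<and> (\<forall>x\<in>X \<nu>. P \<nu> x = x)"
    using bchoice[OF ex] by (elim exE) (rule that, assumption)
  define Y where "Y J \<nu> = (if \<nu> \<in> J then X \<nu> else vecs (B \<nu>))" for J \<nu>
  have main: "\<forall>f. f \<in> vecs (PiE I B) \<and> (\<forall>\<nu>\<in>J. \<forall>k\<in>PiE I B. slice B \<nu> f k \<in> X \<nu>) \<longrightarrow>
      f \<in> lspan {ptensor I B v | v. \<forall>\<nu>\<in>I. v \<nu> \<in> Y J \<nu>}" if "finite J" "J \<subseteq> I" for J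
    using that
  proof (induction J rule: finite_induct)
    case empty
    have "Y {} = (\<lambda>\<nu>. vecs (B \<nu>))" by (simp add: Y_def fun_eq_iff)
    then show ?case using delta_expand[OF fin] by auto
  next
    case (insert a F)
    show ?case
    proof (intro allI impI)
      fix f assume f: "f \<in> vecs (PiE I B) \<and> (\<forall>\<nu>\<in>insert a F. \<forall>k\<in>PiE I B. slice B \<nu> f k \<in> X \<nu>)"
      have aI: "a \<in> I" using insert by blast
      have Pa: "\<forall>x y. P a (x+y) = P a x + P a y" "\<forall>c x. P a (\<lambda>k. c * x k) = (\<lambda>k. c * P a x k)"
        "\<forall>x. P a x \<in> X a" "\<forall>x\<in>X a. P a x = x" using P aI by auto
      have "f \<in> lspan {ptensor I B v | v. \<forall>\<nu>\<in>I. v \<nu> \<in> Y F \<nu>}"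
        using insert f by blast
      have fx: "Qop I B a (P a) f = f"
        by (rule Q_fix[OF aI, of f B "X a"]) (use f Pa in auto)
      have "Qop I B a (P a) f \<in> lspan {ptensor I B v | v. \<forall>\<nu>\<in>I. v \<nu> \<in> Y (insert a F) \<nu>}"
      proof (rule Q_lspan[OF Pa(1,2) \<open>f \<in> lspan _\<close>], rule ballI)
        fix s assume "s \<in> {ptensor I B v | v. \<forall>\<nu>\<in>I. v \<nu> \<in> Y F \<nu>}"
        then obtain v where v: "s = ptensor I B v" "\<forall>\<nu>\<in>I. v \<nu> \<in> Y F \<nu>" by blast
        have va: "v a \<in> vecs (B a)" using v(2) aI insert(2) by (auto simp: Y_def)
        have "Qop I B a (P a) s = ptensor I B (v(a := P a (v a)))"
          unfolding v(1) by (rule Q_ptensor[where v=v and \<nu>=a and B=B, OF Pa(2) fin(1) aI va])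
        moreover have "\<forall>\<nu>\<in>I. (v(a := P a (v a))) \<nu> \<in> Y (insert a F) \<nu>"
          using v(2) Pa(3) by (auto simp: Y_def)
        ultimately show "Qop I B a (P a) s \<in> {ptensor I B v | v. \<forall>\<nu>\<in>I. v \<nu> \<in> Y (insert a F) \<nu>}"
          by blast
      qed
      then show "f \<in> lspan {ptensor I B v | v. \<forall>\<nu>\<in>I. v \<nu> \<in> Y (insert a F) \<nu>}"
        using fx by simp
    qed
  qed
  have eqS: "{ptensor I B v | v. \<forall>\<nu>\<in>I. v \<nu> \<in> Y I \<nu>} = {ptensor I B v | v. \<forall>\<nu>\<in>I. v \<nu> \<in> X \<nu>}"
    by (simp add: Y_def)
  show ?thesis
  proof
    fix f assume "f \<in> TS I B X"
    then have "f \<in> vecs (PiE I B) \<and> (\<forall>\<nu>\<in>I. \<forall>k\<in>PiE I B. slice B \<nu> f k \<in> X \<nu>)"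
      unfolding TS_def by blast
    then show "f \<in> lspan {ptensor I B v | v. \<forall>\<nu>\<in>I. v \<nu> \<in> X \<nu>}"
      using main[OF fin(1) subset_refl] eqS by simp
  qed
qed

lemma KEY:
  fixes X :: "'i \<Rightarrow> ('b \<Rightarrow> 'a::field) set"
  assumes fin: "finite I" "\<forall>\<nu>\<in>I. finite (B \<nu>)" and sub: "\<forall>\<nu>\<in>I. is_subspace (B \<nu>) (X \<nu>)"
  shows "TS I B X = lspan {ptensor I B v | v. \<forall>\<nu>\<in>I. v \<nu> \<in> X \<nu>}"
proof
  show "TS I B X \<subseteq> lspan {ptensor I B v | v. \<forall>\<nu>\<in>I. v \<nu> \<in> X \<nu>}" by (rule KEY_sub[OF assms])
  have "lc (TS I B X)" using sub by (intro TS_lc) (simp add: is_subspace_lc)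
  then show "lspan {ptensor I B v | v. \<forall>\<nu>\<in>I. v \<nu> \<in> X \<nu>} \<subseteq> TS I B X"
    by (rule lspan_sub) (use ptensor_TS[OF fin(1) sub] in blast)
qed

lemma sumsetI: "x \<in> S1 \<Longrightarrow> y \<in> S2 \<Longrightarrow> x + y \<in> {x + y | x y. x \<in> S1 \<and> y \<in> S2}"
  by blast

lemma sumsetE:
  assumes "u \<in> {x + y | x y. x \<in> S1 \<and> y \<in> S2}"
  obtains x y where "u = x + y" "x \<in> S1" "y \<in> S2"
  using assms by blast

lemma lc_sumset:
  fixes S1 S2 :: "('c \<Rightarrow> 'a::field) set"
  assumes a1: "lc S1" and a2: "lc S2"
  shows "lc {x + y | x y. x \<in> S1 \<and> y \<in> S2}"
proof -
  have z1: "0 \<in> S1" and ad1: "\<And>x y. x \<in> S1 \<Longrightarrow> y \<in> S1 \<Longrightarrow> x + y \<in> S1"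
    and sc1: "\<And>c x. x \<in> S1 \<Longrightarrow> (\<lambda>k. c * x k) \<in> S1" using a1 unfolding lc_def by blast+
  have z2: "0 \<in> S2" and ad2: "\<And>x y. x \<in> S2 \<Longrightarrow> y \<in> S2 \<Longrightarrow> x + y \<in> S2"
    and sc2: "\<And>c x. x \<in> S2 \<Longrightarrow> (\<lambda>k. c * x k) \<in> S2" using a2 unfolding lc_def by blast+
  have "0 \<in> {x + y | x y. x \<in> S1 \<and> y \<in> S2}" using sumsetI[OF z1 z2] by simp
  moreover have "u + v \<in> {x + y | x y. x \<in> S1 \<and> y \<in> S2}"
    if u: "u \<in> {x + y | x y. x \<in> S1 \<and> y \<in> S2}" and v: "v \<in> {x + y | x y. x \<in> S1 \<and> y \<in> S2}" for u v
  proof -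
    obtain x1 y1 where 1: "u = x1 + y1" "x1 \<in> S1" "y1 \<in> S2" using u by (rule sumsetE)
    obtain x2 y2 where 2: "v = x2 + y2" "x2 \<in> S1" "y2 \<in> S2" using v by (rule sumsetE)
    have "u + v = (x1 + x2) + (y1 + y2)" using 1 2 by (simp add: algebra_simps)
    then show ?thesis using sumsetI[OF ad1[OF 1(2) 2(2)] ad2[OF 1(3) 2(3)]] by simp
  qed
  moreover have "(\<lambda>k. c * u k) \<in> {x + y | x y. x \<in> S1 \<and> y \<in> S2}"
    if u: "u \<in> {x + y | x y. x \<in> S1 \<and> y \<in> S2}" for c u
  proof -
    obtain x1 y1 where 1: "u = x1 + y1" "x1 \<in> S1" "y1 \<in> S2" using u by (rule sumsetE)
    have "(\<lambda>k. c * u k) = (\<lambda>k. c * x1 k) + (\<lambda>k. c * y1 k)" using 1 by (simp add: algebra_simps fun_eq_iff)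
    then show ?thesis using sumsetI[OF sc1[OF 1(2)] sc2[OF 1(3)]] by simp
  qed
  ultimately show ?thesis unfolding lc_def by blast
qed

lemma lc_Int: "lc S1 \<Longrightarrow> lc S2 \<Longrightarrow> lc (S1 \<inter> S2)"
  unfolding lc_def by auto

lemma upd_subspace:
  assumes "\<forall>\<mu>\<in>I. is_subspace (B \<mu>) (Y \<mu>)" "is_subspace (B \<tau>) S"
  shows "\<forall>\<mu>\<in>I. is_subspace (B \<mu>) ((Y(\<tau> := S)) \<mu>)"
  using assms by auto

lemma TS_slice: "f \<in> TS I B X \<Longrightarrow> \<mu> \<in> I \<Longrightarrow> k \<in> PiE I B \<Longrightarrow> slice B \<mu> f k \<in> X \<mu>"
  unfolding TS_def by blast

lemma HL:
  fixes Y :: "'i \<Rightarrow> ('b \<Rightarrow> complex) set"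
  assumes fin: "finite I" "\<forall>\<nu>\<in>I. finite (B \<nu>)" and tI: "\<tau> \<in> I"
    and Ys: "\<forall>\<mu>\<in>I. is_subspace (B \<mu>) (Y \<mu>)"
    and sWn: "is_subspace (B \<tau>) Wn" and sWm: "is_subspace (B \<tau>) Wm"
    and sF: "\<forall>p. is_subspace (B \<tau>) (F p)" and sG: "\<forall>q. is_subspace (B \<tau>) (G q)"
    and hs: "hodge_split Wn Wm F G n"
  shows "hodge_split (TS I B (Y(\<tau>:=Wn))) (TS I B (Y(\<tau>:=Wm))) (\<lambda>p. TS I B (Y(\<tau>:=F p))) (\<lambda>q. TS I B (Y(\<tau>:=G q))) n"
proof -
  define T where "T S = TS I B (Y(\<tau>:=S))" for S
  define H where "H p = {x + y | x y. x \<in> F p \<inter> Wn \<and> y \<in> Wm} \<inter> {x + y | x y. x \<in> G (n - p) \<inter> Wn \<and> y \<in> Wm}" for p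
  define HT where "HT p = {x + y | x y. x \<in> T (F p) \<inter> T Wn \<and> y \<in> T Wm} \<inter> {x + y | x y. x \<in> T (G (n - p)) \<inter> T Wn \<and> y \<in> T Wm}" for p
  have hs1: "\<forall>x\<in>Wn. \<exists>P h. finite P \<and> (\<forall>p\<in>P. h p \<in> H p) \<and> x - (\<Sum>p\<in>P. h p) \<in> Wm"
    and hs2: "\<forall>P h. finite P \<and> (\<forall>p\<in>P. h p \<in> H p) \<and> (\<Sum>p\<in>P. h p) \<in> Wm \<longrightarrow> (\<forall>p\<in>P. h p \<in> Wm)"
    using hs unfolding hodge_split_def Let_def H_def by simp_all
  have Tsub: "is_subspace (PiE I B) (T S)" if "is_subspace (B \<tau>) S" for S
    unfolding T_def by (rule TS_subspace[OF upd_subspace[OF Ys that]])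
  have Tlc: "lc (T S)" if "is_subspace (B \<tau>) S" for S
    using Tsub[OF that] by (simp add: is_subspace_lc)
  have HTlc: "lc (HT p)" for p
    unfolding HT_def using sF sG sWn sWm
    by (intro lc_Int lc_sumset Tlc) auto
  have part1: "\<forall>f\<in>T Wn. \<exists>P h. finite P \<and> (\<forall>p\<in>P. h p \<in> HT p) \<and> f - (\<Sum>p\<in>P. h p) \<in> T Wm"
  proof
    fix f assume f: "f \<in> T Wn"
    have "f \<in> lspan {ptensor I B v | v. \<forall>\<mu>\<in>I. v \<mu> \<in> (Y(\<tau>:=Wn)) \<mu>}"
      using f KEY[OF fin upd_subspace[OF Ys sWn]] unfolding T_def by blast
    then obtain A c where A: "finite A" "A \<subseteq> {ptensor I B v | v. \<forall>\<mu>\<in>I. v \<mu> \<in> (Y(\<tau>:=Wn)) \<mu>}"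
      "f = (\<lambda>k. \<Sum>a\<in>A. c a * a k)" by (rule lspanE)
    have "\<forall>a\<in>A. \<exists>v. a = ptensor I B v \<and> (\<forall>\<mu>\<in>I. v \<mu> \<in> (Y(\<tau>:=Wn)) \<mu>)" using A(2) by blast
    note ex1 = this
    obtain V where V: "\<forall>a\<in>A. a = ptensor I B (V a) \<and> (\<forall>\<mu>\<in>I. V a \<mu> \<in> (Y(\<tau>:=Wn)) \<mu>)"
      using bchoice[OF ex1] by (elim exE) (rule that, assumption)
    have "\<forall>a\<in>A. \<exists>P h. finite P \<and> (\<forall>p\<in>P. h p \<in> H p) \<and> V a \<tau> - (\<Sum>p\<in>P. h p) \<in> Wm"
    proof
      fix a assume "a \<in> A"
      then have "V a \<tau> \<in> Wn" using V tI by fastforce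
      then show "\<exists>P h. finite P \<and> (\<forall>p\<in>P. h p \<in> H p) \<and> V a \<tau> - (\<Sum>p\<in>P. h p) \<in> Wm"
        using hs1 by blast
    qed
    note ex2 = this
    have ex3: "\<forall>a\<in>A. \<exists>Q. finite (fst Q) \<and> (\<forall>p\<in>fst Q. snd Q p \<in> H p) \<and> V a \<tau> - (\<Sum>p\<in>fst Q. snd Q p) \<in> Wm"
    proof
      fix a assume "a \<in> A"
      then obtain P' h' where "finite P'" "\<forall>p\<in>P'. h' p \<in> H p" "V a \<tau> - (\<Sum>p\<in>P'. h' p) \<in> Wm"
        using ex2 by blast
      then show "\<exists>Q. finite (fst Q) \<and> (\<forall>p\<in>fst Q. snd Q p \<in> H p) \<and> V a \<tau> - (\<Sum>p\<in>fst Q. snd Q p) \<in> Wm"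
        by (intro exI[of _ "(P', h')"]) simp
    qed
    obtain Ph where Ph: "\<forall>a\<in>A. finite (fst (Ph a)) \<and> (\<forall>p\<in>fst (Ph a). snd (Ph a) p \<in> H p)
        \<and> V a \<tau> - (\<Sum>p\<in>fst (Ph a). snd (Ph a) p) \<in> Wm"
      using bchoice[OF ex3] by (elim exE) (rule that, assumption)
    define PP where "PP a = fst (Ph a)" for a
    define hh where "hh a = snd (Ph a)" for a
    have PP: "finite (PP a)" "\<forall>p\<in>PP a. hh a p \<in> H p" "V a \<tau> - (\<Sum>p\<in>PP a. hh a p) \<in> Wm" if "a \<in> A" for a
      using Ph that unfolding PP_def hh_def by auto
    define L where "L a z = ptensor I B ((V a)(\<tau> := z))" for a z
    define R where "R a k = (\<Prod>\<mu>\<in>I-{\<tau>}. V a \<mu> (k \<mu>))" for a k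
    have Lf: "L a z k = (if k \<in> PiE I B then z (k \<tau>) * R a k else 0)" for a z k
    proof -
      have "(\<Prod>\<mu>\<in>I-{\<tau>}. ((V a)(\<tau> := z)) \<mu> (k \<mu>)) = R a k"
        unfolding R_def by (rule prod.cong) auto
      then show ?thesis unfolding L_def ptensor_split[OF fin(1) tI, of B _ k] by simp
    qed
    have Lmem: "L a z \<in> T S" if "a \<in> A" "z \<in> S" "is_subspace (B \<tau>) S" for a z S
    proof -
      have Va: "\<forall>\<mu>\<in>I. V a \<mu> \<in> (Y(\<tau>:=Wn)) \<mu>" using V that(1) by blast
      note zS = that(2)
      have "\<forall>\<mu>\<in>I. ((V a)(\<tau> := z)) \<mu> \<in> (Y(\<tau>:=S)) \<mu>"
      proof
        fix \<mu> assume "\<mu> \<in> I"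
        then show "((V a)(\<tau> := z)) \<mu> \<in> (Y(\<tau>:=S)) \<mu>" using Va zS by (cases "\<mu> = \<tau>") auto
      qed
      then show ?thesis unfolding L_def T_def
        by (rule ptensor_TS[OF fin(1) upd_subspace[OF Ys that(3)]])
    qed
    have Ladd: "L a (x + y) = L a x + L a y" for a x y
      by (simp add: fun_eq_iff Lf algebra_simps)
    have L0: "L a 0 = 0" for a
      by (simp add: fun_eq_iff Lf)
    have LH: "L a z \<in> HT p" if aA: "a \<in> A" and zH: "z \<in> H p" for a z p
    proof -
      obtain x1 y1 where 1: "z = x1 + y1" "x1 \<in> F p \<inter> Wn" "y1 \<in> Wm" using zH unfolding H_def by blast
      obtain x2 y2 where 2: "z = x2 + y2" "x2 \<in> G (n - p) \<inter> Wn" "y2 \<in> Wm" using zH unfolding H_def by blast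
      have "L a x1 \<in> T (F p) \<inter> T Wn" "L a y1 \<in> T Wm" using 1 Lmem[OF aA] sF sWn sWm by auto
      moreover have "L a x2 \<in> T (G (n-p)) \<inter> T Wn" "L a y2 \<in> T Wm" using 2 Lmem[OF aA] sG sWn sWm by auto
      ultimately have "L a z \<in> {x + y |x y. x \<in> T (F p) \<inter> T Wn \<and> y \<in> T Wm}"
        "L a z \<in> {x + y |x y. x \<in> T (G (n - p)) \<inter> T Wn \<and> y \<in> T Wm}"
        unfolding 1(1) Ladd apply blast using 1(1) 2(1) Ladd \<open>L a x2 \<in> _\<close> \<open>L a y2 \<in> _\<close> by (metis (mono_tags, lifting) mem_Collect_eq)
      then show ?thesis unfolding HT_def by blast
    qed
    define P where "P = (\<Union>a\<in>A. PP a)"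
    have finP: "finite P" unfolding P_def using A(1) PP(1) by simp
    define h' where "h' a p = (if p \<in> PP a then hh a p else 0)" for a p
    define hT where "hT p = (\<lambda>k. \<Sum>a\<in>A. c a * L a (h' a p) k)" for p
    have hTmem: "\<forall>p\<in>P. hT p \<in> HT p"
    proof
      fix p assume "p \<in> P"
      have "L a (h' a p) \<in> HT p" if "a \<in> A" for a
      proof (cases "p \<in> PP a")
        case True then show ?thesis using LH[OF that] PP(2)[OF that] by (simp add: h'_def)
      next
        case False then show ?thesis using HTlc[of p] by (simp add: h'_def L0 lc_def)
      qed
      then show "hT p \<in> HT p" unfolding hT_def by (intro lc_lincomb[OF HTlc]) blast
    qed
    have diff: "f - (\<Sum>p\<in>P. hT p) = (\<lambda>k. \<Sum>a\<in>A. c a * L a (V a \<tau> - (\<Sum>p\<in>PP a. hh a p)) k)"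
    proof
      fix k
      have s1: "(\<Sum>p\<in>P. L a (h' a p) k) = (\<Sum>p\<in>PP a. L a (hh a p) k)" if "a \<in> A" for a
      proof -
        have "PP a \<subseteq> P" using that unfolding P_def by blast
        then have "(\<Sum>p\<in>P. L a (h' a p) k) = (\<Sum>p\<in>PP a. L a (h' a p) k)"
          using finP by (intro sum.mono_neutral_right) (auto simp: h'_def L0)
        also have "\<dots> = (\<Sum>p\<in>PP a. L a (hh a p) k)" by (rule sum.cong) (auto simp: h'_def)
        finally show ?thesis .
      qed
      have s2: "L a (V a \<tau> - (\<Sum>p\<in>PP a. hh a p)) k = L a (V a \<tau>) k - (\<Sum>p\<in>PP a. L a (hh a p) k)" for a
        by (simp add: Lf sum_fun_apply sum_distrib_right sum_distrib_left algebra_simps)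
      have s3: "a k = L a (V a \<tau>) k" if "a \<in> A" for a
      proof -
        have "(V a)(\<tau> := V a \<tau>) = V a" by simp
        then show ?thesis using V that unfolding L_def by metis
      qed
      have "(f - (\<Sum>p\<in>P. hT p)) k = (\<Sum>a\<in>A. c a * a k) - (\<Sum>p\<in>P. \<Sum>a\<in>A. c a * L a (h' a p) k)"
        using A(3) by (simp add: hT_def sum_fun_apply)
      also have "\<dots> = (\<Sum>a\<in>A. c a * a k) - (\<Sum>a\<in>A. c a * (\<Sum>p\<in>P. L a (h' a p) k))"
        by (simp add: sum.swap[of _ P] sum_distrib_left)
      also have "\<dots> = (\<Sum>a\<in>A. c a * (L a (V a \<tau>) k - (\<Sum>p\<in>PP a. L a (hh a p) k)))"
        by (simp add: sum_subtractf[symmetric] right_diff_distrib s1 s3 cong: sum.cong)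
      also have "\<dots> = (\<Sum>a\<in>A. c a * L a (V a \<tau> - (\<Sum>p\<in>PP a. hh a p)) k)"
        by (simp add: s2)
      finally show "(f - (\<Sum>p\<in>P. hT p)) k = (\<Sum>a\<in>A. c a * L a (V a \<tau> - (\<Sum>p\<in>PP a. hh a p)) k)" .
    qed
    have "f - (\<Sum>p\<in>P. hT p) \<in> T Wm"
      unfolding diff using sWm PP(3) by (intro lc_lincomb[OF Tlc[OF sWm]] ballI Lmem) auto
    then show "\<exists>P h. finite P \<and> (\<forall>p\<in>P. h p \<in> HT p) \<and> f - (\<Sum>p\<in>P. h p) \<in> T Wm"
      using finP hTmem by blast
  qed
  have part2: "\<forall>P h. finite P \<and> (\<forall>p\<in>P. h p \<in> HT p) \<and> (\<Sum>p\<in>P. h p) \<in> T Wm \<longrightarrow> (\<forall>p\<in>P. h p \<in> T Wm)"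
  proof (intro allI impI ballI)
    fix P h p0 assume a: "finite P \<and> (\<forall>p\<in>P. h p \<in> HT p) \<and> (\<Sum>p\<in>P. h p) \<in> T Wm" and p0: "p0 \<in> P"
    have rep: "\<exists>x y. h p = x + y \<and> x \<in> T (F p) \<inter> T Wn \<and> y \<in> T Wm" 
      "\<exists>x y. h p = x + y \<and> x \<in> T (G (n-p)) \<inter> T Wn \<and> y \<in> T Wm" if "p \<in> P" for p
      using a that unfolding HT_def by blast+
    have sl: "slice B \<tau> (h p) k \<in> H p" if pP: "p \<in> P" and kP: "k \<in> PiE I B" for p k
    proof -
      obtain x1 y1 where 1: "h p = x1 + y1" "x1 \<in> T (F p) \<inter> T Wn" "y1 \<in> T Wm" using rep(1)[OF pP] by blast
      obtain x2 y2 where 2: "h p = x2 + y2" "x2 \<in> T (G (n-p)) \<inter> T Wn" "y2 \<in> T Wm" using rep(2)[OF pP] by blast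
      have "slice B \<tau> x1 k \<in> F p \<inter> Wn" "slice B \<tau> y1 k \<in> Wm"
        using 1 TS_slice[OF _ tI kP] unfolding T_def by fastforce+
      moreover have "slice B \<tau> x2 k \<in> G (n-p) \<inter> Wn" "slice B \<tau> y2 k \<in> Wm"
        using 2 TS_slice[OF _ tI kP] unfolding T_def by fastforce+
      moreover have "slice B \<tau> (h p) k = slice B \<tau> x1 k + slice B \<tau> y1 k"
        "slice B \<tau> (h p) k = slice B \<tau> x2 k + slice B \<tau> y2 k"
        using 1(1) 2(1) slice_add by metis+
      ultimately have "slice B \<tau> (h p) k \<in> {x + y |x y. x \<in> F p \<inter> Wn \<and> y \<in> Wm}"
        "slice B \<tau> (h p) k \<in> {x + y |x y. x \<in> G (n - p) \<inter> Wn \<and> y \<in> Wm}" by blast+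
      then show ?thesis unfolding H_def by blast
    qed
    obtain x y where xy: "h p0 = x + y" "x \<in> T (F p0) \<inter> T Wn" "y \<in> T Wm" using rep(1)[OF p0] by blast
    have "h p0 \<in> vecs (PiE I B)"
      using xy unfolding T_def TS_def vecs_def by auto
    moreover have "slice B \<mu> (h p0) k \<in> (Y(\<tau>:=Wm)) \<mu>" if "\<mu> \<in> I" "k \<in> PiE I B" for \<mu> k
    proof (cases "\<mu> = \<tau>")
      case True
      have c1: "\<forall>p\<in>P. slice B \<tau> (h p) k \<in> H p" using sl that(2) by blast
      have hsum: "(\<Sum>p\<in>P. h p) \<in> T Wm" using a by blast
      have "slice B \<tau> (\<Sum>p\<in>P. h p) k \<in> Wm"
        using TS_slice[OF hsum[unfolded T_def] tI that(2)] by simp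
      then have c2: "(\<Sum>p\<in>P. slice B \<tau> (h p) k) \<in> Wm" by (simp only: slice_sum)
      have finP: "finite P" using a by blast
      have "\<forall>p\<in>P. slice B \<tau> (h p) k \<in> Wm"
      proof -
        have "finite P \<and> (\<forall>p\<in>P. slice B \<tau> (h p) k \<in> H p) \<and> (\<Sum>p\<in>P. slice B \<tau> (h p) k) \<in> Wm
           \<longrightarrow> (\<forall>p\<in>P. slice B \<tau> (h p) k \<in> Wm)"
          using spec[OF spec[OF hs2, of P], of "\<lambda>p. slice B \<tau> (h p) k"] by simp
        then show ?thesis using finP c1 c2 by blast
      qed
      then show ?thesis using True p0 by simp
    next
      case False
      have "slice B \<mu> x k \<in> Y \<mu>" "slice B \<mu> y k \<in> Y \<mu>"
        using xy TS_slice[OF _ that] False unfolding T_def by fastforce+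
      then have "slice B \<mu> x k + slice B \<mu> y k \<in> Y \<mu>" using Ys that(1) unfolding is_subspace_def by blast
      then show ?thesis using False xy(1) by (metis fun_upd_other slice_add)
    qed
    ultimately show "h p0 \<in> T Wm" unfolding T_def TS_def by blast
  qed
  show ?thesis
    using conjI[OF part1 part2] unfolding hodge_split_def Let_def HT_def T_def .
qed

lemma TS_full: "TS I B (\<lambda>\<mu>. vecs (B \<mu>)) = vecs (PiE I B)"
  unfolding TS_def by (auto simp: slice_vecs)

lemma TS_Int: "TS I B X \<inter> TS I B X' = TS I B (\<lambda>\<mu>. X \<mu> \<inter> X' \<mu>)"
  unfolding TS_def by blast

lemma TS_cong: "(\<And>\<mu>. \<mu> \<in> I \<Longrightarrow> X \<mu> = X' \<mu>) \<Longrightarrow> TS I B X = TS I B X'"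
  unfolding TS_def by simp

lemma TS_mono: "(\<And>\<mu>. \<mu> \<in> I \<Longrightarrow> X \<mu> \<subseteq> X' \<mu>) \<Longrightarrow> TS I B X \<subseteq> TS I B X'"
  unfolding TS_def by blast

lemma TS_zero:
  fixes X :: "'i \<Rightarrow> ('b \<Rightarrow> 'a::field) set"
  assumes "\<tau> \<in> I" "X \<tau> = {0}" "\<forall>\<mu>\<in>I. 0 \<in> X \<mu>"
  shows "TS I B X = {0}"
proof
  show "TS I B X \<subseteq> {0}"
  proof
    fix f assume f: "f \<in> TS I B X"
    have "f k = 0" for k
    proof (cases "k \<in> PiE I B")
      case True
      have "slice B \<tau> f k = 0" using TS_slice[OF f assms(1) True] assms(2) by simp
      then have "slice B \<tau> f k (k \<tau>) = 0" by simp
      moreover have "k \<tau> \<in> B \<tau>" using True assms(1) by auto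
      ultimately show ?thesis by (simp add: slice_def)
    next
      case False then show ?thesis using f unfolding TS_def vecs_def by blast
    qed
    then show "f \<in> {0}" by (simp add: fun_eq_iff)
  qed
  show "{0} \<subseteq> TS I B X" using assms(3) by (auto simp: TS_def vecs_def slice_zero)
qed

lemma cplx_TS: "cplx (TS I B X) = TS I B (\<lambda>\<mu>. cplx (X \<mu>))"
proof
  show "cplx (TS I B X) \<subseteq> TS I B (\<lambda>\<mu>. cplx (X \<mu>))"
  proof
    fix w assume "w \<in> cplx (TS I B X)"
    then obtain u v where uv: "u \<in> TS I B X" "v \<in> TS I B X"
      "w = (\<lambda>k. complex_of_real (u k) + \<i> * complex_of_real (v k))" unfolding cplx_def by blast
    have "w \<in> vecs (PiE I B)" using uv unfolding TS_def vecs_def by auto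
    moreover have "slice B \<mu> w k \<in> cplx (X \<mu>)" if "\<mu> \<in> I" "k \<in> PiE I B" for \<mu> k
    proof -
      have "slice B \<mu> w k = (\<lambda>b. complex_of_real (slice B \<mu> u k b) + \<i> * complex_of_real (slice B \<mu> v k b))"
        unfolding uv(3) by (auto simp: slice_def)
      then show ?thesis unfolding cplx_def using TS_slice[OF uv(1) that] TS_slice[OF uv(2) that] by blast
    qed
    ultimately show "w \<in> TS I B (\<lambda>\<mu>. cplx (X \<mu>))" unfolding TS_def by blast
  qed
next
  show "TS I B (\<lambda>\<mu>. cplx (X \<mu>)) \<subseteq> cplx (TS I B X)"
  proof
    fix w assume w: "w \<in> TS I B (\<lambda>\<mu>. cplx (X \<mu>))"
    define u where "u k = Re (w k)" for k
    define v where "v k = Im (w k)" for k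
    have we: "w = (\<lambda>k. complex_of_real (u k) + \<i> * complex_of_real (v k))"
      by (simp add: u_def v_def fun_eq_iff complex_eq_iff)
    have "u \<in> TS I B X \<and> v \<in> TS I B X"
    proof -
      have "u \<in> vecs (PiE I B)" "v \<in> vecs (PiE I B)" using w unfolding TS_def vecs_def u_def v_def by auto
      moreover have "slice B \<mu> u k \<in> X \<mu> \<and> slice B \<mu> v k \<in> X \<mu>" if "\<mu> \<in> I" "k \<in> PiE I B" for \<mu> k
      proof -
        note mk = that
        obtain a c where ac: "a \<in> X \<mu>" "c \<in> X \<mu>" "slice B \<mu> w k = (\<lambda>b. complex_of_real (a b) + \<i> * complex_of_real (c b))"
          using TS_slice[OF w mk] unfolding cplx_def by blast
        have "slice B \<mu> u k = (\<lambda>b. Re (slice B \<mu> w k b))" "slice B \<mu> v k = (\<lambda>b. Im (slice B \<mu> w k b))"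
          by (auto simp: slice_def u_def v_def)
        then have "slice B \<mu> u k = a" "slice B \<mu> v k = c" using ac(3) by (simp_all add: fun_eq_iff)
        then show ?thesis using ac by simp
      qed
      ultimately show ?thesis unfolding TS_def by blast
    qed
    then show "w \<in> cplx (TS I B X)" unfolding cplx_def using we by blast
  qed
qed

lemma conj_TS: "conj_set (TS I B X) = TS I B (\<lambda>\<mu>. conj_set (X \<mu>))"
proof
  show "conj_set (TS I B X) \<subseteq> TS I B (\<lambda>\<mu>. conj_set (X \<mu>))"
  proof
    fix g assume "g \<in> conj_set (TS I B X)"
    then obtain f where f: "f \<in> TS I B X" "g = (\<lambda>k. cnj (f k))" unfolding conj_set_def by blast
    have "g \<in> vecs (PiE I B)" using f unfolding TS_def vecs_def by auto
    moreover have "slice B \<mu> g k \<in> conj_set (X \<mu>)" if "\<mu> \<in> I" "k \<in> PiE I B" for \<mu> k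
    proof -
      have "slice B \<mu> g k = (\<lambda>b. cnj (slice B \<mu> f k b))" unfolding f(2) by (auto simp: slice_def)
      then show ?thesis unfolding conj_set_def using TS_slice[OF f(1) that] by blast
    qed
    ultimately show "g \<in> TS I B (\<lambda>\<mu>. conj_set (X \<mu>))" unfolding TS_def by blast
  qed
next
  show "TS I B (\<lambda>\<mu>. conj_set (X \<mu>)) \<subseteq> conj_set (TS I B X)"
  proof
    fix g assume g: "g \<in> TS I B (\<lambda>\<mu>. conj_set (X \<mu>))"
    define f where "f k = cnj (g k)" for k
    have ge: "g = (\<lambda>k. cnj (f k))" by (simp add: f_def)
    have "f \<in> vecs (PiE I B)" using g unfolding TS_def vecs_def f_def by auto
    moreover have "slice B \<mu> f k \<in> X \<mu>" if "\<mu> \<in> I" "k \<in> PiE I B" for \<mu> k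
    proof -
      note mk = that
      obtain x where x: "x \<in> X \<mu>" "slice B \<mu> g k = (\<lambda>b. cnj (x b))"
        using TS_slice[OF g mk] unfolding conj_set_def by blast
      have "slice B \<mu> f k = (\<lambda>b. cnj (slice B \<mu> g k b))" by (auto simp: slice_def f_def)
      then have "slice B \<mu> f k = x" using x(2) by (simp add: fun_eq_iff)
      then show ?thesis using x by simp
    qed
    ultimately have "f \<in> TS I B X" unfolding TS_def by blast
    then show "g \<in> conj_set (TS I B X)" unfolding conj_set_def using ge by blast
  qed
qed

lemma cplx_subspace:
  assumes "is_subspace B S"
  shows "is_subspace B (cplx S)"
proof -
  have sv: "S \<subseteq> vecs B" and z: "0 \<in> S" and ad: "\<And>x y. x \<in> S \<Longrightarrow> y \<in> S \<Longrightarrow> x + y \<in> S"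
    and sc: "\<And>c x. x \<in> S \<Longrightarrow> (\<lambda>k. c * x k) \<in> S" using assms unfolding is_subspace_def by blast+
  have mk: "(\<lambda>k. complex_of_real (u k) + \<i> * complex_of_real (v k)) \<in> cplx S" if "u \<in> S" "v \<in> S" for u v
    unfolding cplx_def using that by blast
  have "cplx S \<subseteq> vecs B"
  proof
    fix w assume "w \<in> cplx S"
    then obtain u v where uv: "u \<in> S" "v \<in> S" "w = (\<lambda>k. complex_of_real (u k) + \<i> * complex_of_real (v k))"
      unfolding cplx_def by blast
    have "u \<in> vecs B" "v \<in> vecs B" using uv sv by auto
    then show "w \<in> vecs B" using uv(3) unfolding vecs_def by simp
  qed
  moreover have "0 \<in> cplx S" using mk[OF z z] by (simp add: zero_fun_def)
  moreover have "x + y \<in> cplx S" if xin: "x \<in> cplx S" and yin: "y \<in> cplx S" for x y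
  proof -
    obtain u v where uv: "u \<in> S" "v \<in> S" "x = (\<lambda>k. complex_of_real (u k) + \<i> * complex_of_real (v k))"
      using xin unfolding cplx_def by blast
    obtain u' v' where uv': "u' \<in> S" "v' \<in> S" "y = (\<lambda>k. complex_of_real (u' k) + \<i> * complex_of_real (v' k))"
      using yin unfolding cplx_def by blast
    have "x + y = (\<lambda>k. complex_of_real ((u + u') k) + \<i> * complex_of_real ((v + v') k))"
      using uv uv' by (simp add: fun_eq_iff algebra_simps)
    then show ?thesis using mk[OF ad[OF uv(1) uv'(1)] ad[OF uv(2) uv'(2)]] by simp
  qed
  moreover have "(\<lambda>k. c * x k) \<in> cplx S" if xin: "x \<in> cplx S" for c x
  proof -
    obtain u v where uv: "u \<in> S" "v \<in> S" "x = (\<lambda>k. complex_of_real (u k) + \<i> * complex_of_real (v k))"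
      using xin unfolding cplx_def by blast
    define u' where "u' = (\<lambda>k. Re c * u k) + (\<lambda>k. (- Im c) * v k)"
    define v' where "v' = (\<lambda>k. Im c * u k) + (\<lambda>k. Re c * v k)"
    have s1: "(\<lambda>k. Re c * u k) \<in> S" "(\<lambda>k. (- Im c) * v k) \<in> S" "(\<lambda>k. Im c * u k) \<in> S" "(\<lambda>k. Re c * v k) \<in> S"
      by (rule sc, rule uv)+
    have "u' \<in> S" "v' \<in> S" unfolding u'_def v'_def by (rule ad[OF s1(1) s1(2)], rule ad[OF s1(3) s1(4)])
    moreover have "(\<lambda>k. c * x k) = (\<lambda>k. complex_of_real (u' k) + \<i> * complex_of_real (v' k))"
      unfolding uv(3) u'_def v'_def
      by (simp add: fun_eq_iff complex_eq_iff algebra_simps)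
    ultimately show ?thesis using mk by simp
  qed
  ultimately show ?thesis unfolding is_subspace_def by blast
qed

lemma conj_subspace:
  assumes "is_subspace B S"
  shows "is_subspace B (conj_set S)"
proof -
  have sv: "S \<subseteq> vecs B" and z: "0 \<in> S" and ad: "\<And>x y. x \<in> S \<Longrightarrow> y \<in> S \<Longrightarrow> x + y \<in> S"
    and sc: "\<And>c x. x \<in> S \<Longrightarrow> (\<lambda>k. c * x k) \<in> S" using assms unfolding is_subspace_def by blast+
  have mk: "(\<lambda>k. cnj (u k)) \<in> conj_set S" if "u \<in> S" for u
    unfolding conj_set_def using that by blast
  have "conj_set S \<subseteq> vecs B" using sv unfolding conj_set_def vecs_def by auto
  moreover have "0 \<in> conj_set S" using mk[OF z] by (simp add: zero_fun_def)
  moreover have "x + y \<in> conj_set S" if xin: "x \<in> conj_set S" and yin: "y \<in> conj_set S" for x y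
  proof -
    obtain u where u: "u \<in> S" "x = (\<lambda>k. cnj (u k))" using xin unfolding conj_set_def by blast
    obtain v where v: "v \<in> S" "y = (\<lambda>k. cnj (v k))" using yin unfolding conj_set_def by blast
    have "x + y = (\<lambda>k. cnj ((u + v) k))" using u v by (simp add: fun_eq_iff)
    then show ?thesis using mk[OF ad[OF u(1) v(1)]] by simp
  qed
  moreover have "(\<lambda>k. c * x k) \<in> conj_set S" if xin: "x \<in> conj_set S" for c x
  proof -
    obtain u where u: "u \<in> S" "x = (\<lambda>k. cnj (u k))" using xin unfolding conj_set_def by blast
    have "(\<lambda>k. c * x k) = (\<lambda>k. cnj ((\<lambda>k. cnj c * u k) k))" using u by (simp add: fun_eq_iff)
    moreover have "(\<lambda>k. cnj c * u k) \<in> S" by (rule sc[OF u(1)])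
    ultimately show ?thesis using mk[of "\<lambda>k. cnj c * u k"] by simp
  qed
  ultimately show ?thesis unfolding is_subspace_def by blast
qed

lemma cplx_mono: "S \<subseteq> S' \<Longrightarrow> cplx S \<subseteq> cplx S'"
  unfolding cplx_def by blast

lemma conj_mono: "S \<subseteq> S' \<Longrightarrow> conj_set S \<subseteq> conj_set S'"
  unfolding conj_set_def by blast

lemma cplx_zero: "cplx {0} = {0}"
  unfolding cplx_def by (auto simp: zero_fun_def)

lemma conj_zero: "conj_set {0} = {0}"
  unfolding conj_set_def by (auto simp: zero_fun_def)

lemma cplx_vecs: "cplx (vecs B) = vecs B"
proof
  show "cplx (vecs B) \<subseteq> vecs B" unfolding cplx_def vecs_def by auto
  show "vecs B \<subseteq> cplx (vecs B)"
  proof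
    fix w :: "'a \<Rightarrow> complex" assume w: "w \<in> vecs B"
    have "w = (\<lambda>k. complex_of_real (Re (w k)) + \<i> * complex_of_real (Im (w k)))"
      by (simp add: fun_eq_iff complex_eq_iff)
    moreover have "(\<lambda>k. Re (w k)) \<in> vecs B" "(\<lambda>k. Im (w k)) \<in> vecs B" using w unfolding vecs_def by auto
    ultimately show "w \<in> cplx (vecs B)" unfolding cplx_def
      by (intro CollectI bexI[of _ "\<lambda>k. Re (w k)"] bexI[of _ "\<lambda>k. Im (w k)"])
  qed
qed

lemma conj_vecs: "conj_set (vecs B) = vecs B"
proof
  show "conj_set (vecs B) \<subseteq> vecs B" unfolding conj_set_def vecs_def by auto
  show "vecs B \<subseteq> conj_set (vecs B)"
  proof
    fix w :: "'a \<Rightarrow> complex" assume w: "w \<in> vecs B"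
    have "w = (\<lambda>k. cnj ((\<lambda>k. cnj (w k)) k))" by simp
    moreover have "(\<lambda>k. cnj (w k)) \<in> vecs B" using w unfolding vecs_def by auto
    ultimately show "w \<in> conj_set (vecs B)" unfolding conj_set_def
      by (intro rev_image_eqI[of "\<lambda>k. cnj (w k)"])
  qed
qed

lemma asc_cplx:
  assumes "asc_filt (is_subspace B) (vecs B) W"
  shows "asc_filt (is_subspace B) (vecs B) (\<lambda>n. cplx (W n))"
proof -
  have a: "\<forall>n. is_subspace B (W n) \<and> W n \<subseteq> vecs B" "\<forall>n m. n \<le> m \<longrightarrow> W n \<subseteq> W m"
    "\<exists>a b. W a = {0} \<and> W b = vecs B" using assms unfolding asc_filt_def by blast+
  obtain a b where ab: "W a = {0}" "W b = vecs B" using a(3) by blast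
  have "\<forall>n. is_subspace B (cplx (W n)) \<and> cplx (W n) \<subseteq> vecs B"
  proof
    fix n
    have "is_subspace B (cplx (W n))" using a(1) cplx_subspace by blast
    then show "is_subspace B (cplx (W n)) \<and> cplx (W n) \<subseteq> vecs B" by (simp add: is_subspace_lc)
  qed
  moreover have "\<forall>n m. n \<le> m \<longrightarrow> cplx (W n) \<subseteq> cplx (W m)" using a(2) cplx_mono by blast
  moreover have "cplx (W a) = {0}" "cplx (W b) = vecs B" using ab cplx_zero cplx_vecs by simp_all
  ultimately show ?thesis unfolding asc_filt_def by blast
qed

lemma desc_conj:
  assumes "desc_filt (is_subspace B) (vecs B) F"
  shows "desc_filt (is_subspace B) (vecs B) (\<lambda>n. conj_set (F n))"
proof -
  have a: "\<forall>n. is_subspace B (F n) \<and> F n \<subseteq> vecs B" "\<forall>p q. p \<le> q \<longrightarrow> F q \<subseteq> F p"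
    "\<exists>a b. F a = vecs B \<and> F b = {0}" using assms unfolding desc_filt_def by blast+
  obtain a b where ab: "F a = vecs B" "F b = {0}" using a(3) by blast
  have "\<forall>n. is_subspace B (conj_set (F n)) \<and> conj_set (F n) \<subseteq> vecs B"
  proof
    fix n
    have "is_subspace B (conj_set (F n))" using a(1) conj_subspace by blast
    then show "is_subspace B (conj_set (F n)) \<and> conj_set (F n) \<subseteq> vecs B" by (simp add: is_subspace_lc)
  qed
  moreover have "\<forall>p q. p \<le> q \<longrightarrow> conj_set (F q) \<subseteq> conj_set (F p)" using a(2) conj_mono by blast
  moreover have "conj_set (F a) = vecs B" "conj_set (F b) = {0}" using ab conj_zero conj_vecs by simp_all
  ultimately show ?thesis unfolding desc_filt_def by blast
qed

lemma asc_TS: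
  fixes Y :: "'i \<Rightarrow> ('b \<Rightarrow> 'a::field) set"
  assumes tI: "\<tau> \<in> I" and Ys: "\<forall>\<mu>\<in>I. is_subspace (B \<mu>) (Y \<mu>)" and Yt: "Y \<tau> = vecs (B \<tau>)"
    and af: "asc_filt (is_subspace (B \<tau>)) (vecs (B \<tau>)) Wf"
  shows "asc_filt (is_subspace (PiE I B)) (TS I B Y) (\<lambda>n. TS I B (Y(\<tau> := Wf n)))"
proof -
  have a: "\<forall>n. is_subspace (B \<tau>) (Wf n) \<and> Wf n \<subseteq> vecs (B \<tau>)" "\<forall>n m. n \<le> m \<longrightarrow> Wf n \<subseteq> Wf m"
    "\<exists>a b. Wf a = {0} \<and> Wf b = vecs (B \<tau>)" using af unfolding asc_filt_def by blast+
  obtain a b where ab: "Wf a = {0}" "Wf b = vecs (B \<tau>)" using a(3) by blast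
  have "is_subspace (PiE I B) (TS I B (Y(\<tau> := Wf n)))" for n
    using a(1) by (intro TS_subspace upd_subspace[OF Ys]) blast
  moreover have "TS I B (Y(\<tau> := Wf n)) \<subseteq> TS I B Y" for n
    using a(1) Yt by (intro TS_mono) auto
  moreover have "TS I B (Y(\<tau> := Wf n)) \<subseteq> TS I B (Y(\<tau> := Wf m))" if "n \<le> m" for n m
    using a(2) that by (intro TS_mono) auto
  moreover have "TS I B (Y(\<tau> := Wf a)) = {0}"
  proof (rule TS_zero[OF tI])
    show "(Y(\<tau> := Wf a)) \<tau> = {0}" using ab by simp
    show "\<forall>\<mu>\<in>I. 0 \<in> (Y(\<tau> := Wf a)) \<mu>" using Ys ab unfolding is_subspace_def by auto
  qed
  moreover have "TS I B (Y(\<tau> := Wf b)) = TS I B Y" using ab Yt by (metis fun_upd_triv)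
  ultimately show ?thesis unfolding asc_filt_def by blast
qed

lemma desc_TS:
  fixes Y :: "'i \<Rightarrow> ('b \<Rightarrow> 'a::field) set"
  assumes tI: "\<tau> \<in> I" and Ys: "\<forall>\<mu>\<in>I. is_subspace (B \<mu>) (Y \<mu>)" and Yt: "Y \<tau> = vecs (B \<tau>)"
    and af: "desc_filt (is_subspace (B \<tau>)) (vecs (B \<tau>)) Wf"
  shows "desc_filt (is_subspace (PiE I B)) (TS I B Y) (\<lambda>n. TS I B (Y(\<tau> := Wf n)))"
proof -
  have a: "\<forall>n. is_subspace (B \<tau>) (Wf n) \<and> Wf n \<subseteq> vecs (B \<tau>)" "\<forall>p q. p \<le> q \<longrightarrow> Wf q \<subseteq> Wf p"
    "\<exists>a b. Wf a = vecs (B \<tau>) \<and> Wf b = {0}" using af unfolding desc_filt_def by blast+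
  obtain a b where ab: "Wf a = vecs (B \<tau>)" "Wf b = {0}" using a(3) by blast
  have "is_subspace (PiE I B) (TS I B (Y(\<tau> := Wf n)))" for n
    using a(1) by (intro TS_subspace upd_subspace[OF Ys]) blast
  moreover have "TS I B (Y(\<tau> := Wf n)) \<subseteq> TS I B Y" for n
    using a(1) Yt by (intro TS_mono) auto
  moreover have "TS I B (Y(\<tau> := Wf q)) \<subseteq> TS I B (Y(\<tau> := Wf p))" if "p \<le> q" for p q
    using a(2) that by (intro TS_mono) auto
  moreover have "TS I B (Y(\<tau> := Wf b)) = {0}"
  proof (rule TS_zero[OF tI])
    show "(Y(\<tau> := Wf b)) \<tau> = {0}" using ab by simp
    show "\<forall>\<mu>\<in>I. 0 \<in> (Y(\<tau> := Wf b)) \<mu>" using Ys ab unfolding is_subspace_def by auto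
  qed
  moreover have "TS I B (Y(\<tau> := Wf a)) = TS I B Y" using ab Yt by (metis fun_upd_triv)
  ultimately show ?thesis unfolding desc_filt_def by blast
qed

lemma vecs_subspace: "is_subspace B (vecs B :: ('b \<Rightarrow> 'a::field) set)"
  unfolding is_subspace_def vecs_def by auto

lemma full_subspace: "\<forall>\<mu>\<in>I. is_subspace (B \<mu>) ((\<lambda>\<mu>. vecs (B \<mu>) :: ('b \<Rightarrow> 'a::field) set) \<mu>)"
  using vecs_subspace by blast

lemma upd_full_subspace:
  fixes S :: "('b \<Rightarrow> 'a::field) set"
  shows "is_subspace (B \<tau>) S \<Longrightarrow> \<forall>\<mu>\<in>I. is_subspace (B \<mu>) (((\<lambda>\<mu>. vecs (B \<mu>))(\<tau> := S)) \<mu>)"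
  using vecs_subspace by auto

lemma upd_Int:
  fixes S :: "('b \<Rightarrow> 'a::field) set"
  assumes "\<tau> \<noteq> \<nu>" "S \<subseteq> vecs (B \<tau>)" "A \<subseteq> vecs (B \<nu>)"
  shows "TS I B ((\<lambda>\<mu>. vecs (B \<mu>))(\<tau> := S)) \<inter> TS I B ((\<lambda>\<mu>. vecs (B \<mu>))(\<nu> := A))
       = TS I B (((\<lambda>\<mu>. vecs (B \<mu>))(\<nu> := A))(\<tau> := S))"
  unfolding TS_Int
proof (rule TS_cong)
  fix \<mu> assume "\<mu> \<in> I"
  show "((\<lambda>\<mu>. vecs (B \<mu>))(\<tau> := S)) \<mu> \<inter> ((\<lambda>\<mu>. vecs (B \<mu>))(\<nu> := A)) \<mu> = (((\<lambda>\<mu>. vecs (B \<mu>))(\<nu> := A))(\<tau> := S)) \<mu>"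
    using assms by (cases "\<mu> = \<tau>"; cases "\<mu> = \<nu>") auto
qed

lemma tensor_W_TS:
  assumes "finite I" "\<forall>\<nu>\<in>I. finite (B \<nu>)" "is_subspace (B \<tau>) (W \<tau> n)"
  shows "tensor_W I B W \<tau> n = TS I B ((\<lambda>\<mu>. vecs (B \<mu>))(\<tau> := W \<tau> n))"
proof -
  have "TS I B ((\<lambda>\<mu>. vecs (B \<mu>))(\<tau> := W \<tau> n)) = lspan {ptensor I B v | v. \<forall>\<nu>\<in>I. v \<nu> \<in> ((\<lambda>\<mu>. vecs (B \<mu>))(\<tau> := W \<tau> n)) \<nu>}"
    by (rule KEY[OF assms(1,2) upd_full_subspace[where B=B and \<tau>=\<tau> and I=I, OF assms(3)]])
  then show ?thesis unfolding tensor_W_def by (simp add: fun_upd_def)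
qed

lemma tensor_F_TS:
  assumes "finite I" "\<forall>\<nu>\<in>I. finite (B \<nu>)" "is_subspace (B \<tau>) (F \<tau> n)"
  shows "tensor_F I B F \<tau> n = TS I B ((\<lambda>\<mu>. vecs (B \<mu>))(\<tau> := F \<tau> n))"
proof -
  have "TS I B ((\<lambda>\<mu>. vecs (B \<mu>))(\<tau> := F \<tau> n)) = lspan {ptensor I B v | v. \<forall>\<nu>\<in>I. v \<nu> \<in> ((\<lambda>\<mu>. vecs (B \<mu>))(\<tau> := F \<tau> n)) \<nu>}"
    by (rule KEY[OF assms(1,2) upd_full_subspace[where B=B and \<tau>=\<tau> and I=I, OF assms(3)]])
  then show ?thesis unfolding tensor_F_def by (simp add: fun_upd_def)
qed

lemma cplx_upd: "cplx (TS I B ((\<lambda>\<mu>. vecs (B \<mu>))(\<tau> := S))) = TS I B ((\<lambda>\<mu>. vecs (B \<mu>))(\<tau> := cplx S))"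
  unfolding cplx_TS by (rule TS_cong) (simp add: cplx_vecs)

lemma conj_upd: "conj_set (TS I B ((\<lambda>\<mu>. vecs (B \<mu>))(\<tau> := S))) = TS I B ((\<lambda>\<mu>. vecs (B \<mu>))(\<tau> := conj_set S))"
  unfolding conj_TS by (rule TS_cong) (simp add: conj_vecs)

lemma factor_facts:
  assumes "mixed_R_HS B W F"
  shows "finite B" "asc_filt (is_subspace B) (vecs B) W" "desc_filt (is_subspace B) (vecs B) F"
    "\<forall>n. hodge_split (cplx (W n)) (cplx (W (n - 1))) F (\<lambda>q. conj_set (F q)) n"
    "\<And>n. is_subspace B (W n)" "\<And>n. is_subspace B (cplx (W n))" "\<And>p. is_subspace B (F p)"
    "\<And>p. is_subspace B (conj_set (F p))"
proof -
  show a: "finite B" "asc_filt (is_subspace B) (vecs B) W" "desc_filt (is_subspace B) (vecs B) F"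
    "\<forall>n. hodge_split (cplx (W n)) (cplx (W (n - 1))) F (\<lambda>q. conj_set (F q)) n"
    using assms unfolding mixed_R_HS_def by blast+
  show w: "is_subspace B (W n)" for n using a(2) unfolding asc_filt_def by blast
  show "is_subspace B (cplx (W n))" for n by (rule cplx_subspace[OF w])
  show f: "is_subspace B (F p)" for p using a(3) unfolding desc_filt_def by blast
  show "is_subspace B (conj_set (F p))" for p by (rule conj_subspace[OF f])
qed

lemma caseC:
  fixes W :: "'i \<Rightarrow> int \<Rightarrow> ('b \<Rightarrow> real) set" and F :: "'i \<Rightarrow> int \<Rightarrow> ('b \<Rightarrow> complex) set"
    and A :: "('b \<Rightarrow> complex) set"
  assumes finI: "finite I" and finB: "\<forall>\<nu>\<in>I. finite (B \<nu>)" and tI: "\<tau> \<in> I" and nI: "\<nu> \<in> I"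
    and tn: "\<tau> \<noteq> \<nu>" and hsT: "mixed_R_HS (B \<tau>) (W \<tau>) (F \<tau>)" and sA: "is_subspace (B \<nu>) A"
  shows "mixed_C_HS (PiE I B) (TS I B ((\<lambda>\<mu>. vecs (B \<mu>))(\<nu> := A)))
     (\<lambda>k. cplx (tensor_W I B W \<tau> k) \<inter> TS I B ((\<lambda>\<mu>. vecs (B \<mu>))(\<nu> := A)))
     (\<lambda>p. tensor_F I B F \<tau> p \<inter> TS I B ((\<lambda>\<mu>. vecs (B \<mu>))(\<nu> := A)))
     (\<lambda>q. conj_set (tensor_F I B F \<tau> q) \<inter> TS I B ((\<lambda>\<mu>. vecs (B \<mu>))(\<nu> := A)))"
proof -
  note ff = factor_facts[OF hsT]
  define Y where "Y = ((\<lambda>\<mu>. vecs (B \<mu>) :: ('b \<Rightarrow> complex) set)(\<nu> := A))"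
  have Ys: "\<forall>\<mu>\<in>I. is_subspace (B \<mu>) (Y \<mu>)" unfolding Y_def
    by (rule upd_full_subspace[where B=B and \<tau>=\<nu> and I=I, OF sA])
  have Yt: "Y \<tau> = vecs (B \<tau>)" using tn by (simp add: Y_def)
  have Asub: "A \<subseteq> vecs (B \<nu>)" using sA by (simp add: is_subspace_lc)
  have sv: "is_subspace (B \<tau>) S \<Longrightarrow> S \<subseteq> vecs (B \<tau>)" for S by (simp add: is_subspace_lc)
  have eW: "(\<lambda>k. cplx (tensor_W I B W \<tau> k) \<inter> TS I B Y)
      = (\<lambda>k. TS I B (Y(\<tau> := cplx (W \<tau> k))))"
  proof
    fix k
    show "cplx (tensor_W I B W \<tau> k) \<inter> TS I B Y = TS I B (Y(\<tau> := cplx (W \<tau> k)))"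
      unfolding tensor_W_TS[where W=W and \<tau>=\<tau>, OF finI finB ff(5)] cplx_upd Y_def
      by (rule upd_Int[OF tn sv[OF ff(6)] Asub])
  qed
  have eF: "(\<lambda>p. tensor_F I B F \<tau> p \<inter> TS I B Y)
      = (\<lambda>p. TS I B (Y(\<tau> := F \<tau> p)))"
  proof
    fix p
    show "tensor_F I B F \<tau> p \<inter> TS I B Y = TS I B (Y(\<tau> := F \<tau> p))"
      unfolding tensor_F_TS[where F=F and \<tau>=\<tau>, OF finI finB ff(7)] Y_def
      by (rule upd_Int[OF tn sv[OF ff(7)] Asub])
  qed
  have eG: "(\<lambda>q. conj_set (tensor_F I B F \<tau> q) \<inter> TS I B Y)
      = (\<lambda>q. TS I B (Y(\<tau> := conj_set (F \<tau> q))))"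
  proof
    fix q
    show "conj_set (tensor_F I B F \<tau> q) \<inter> TS I B Y = TS I B (Y(\<tau> := conj_set (F \<tau> q)))"
      unfolding tensor_F_TS[where F=F and \<tau>=\<tau>, OF finI finB ff(7)] conj_upd Y_def
      by (rule upd_Int[OF tn sv[OF ff(8)] Asub])
  qed
  have U: "TS I B ((\<lambda>\<mu>. vecs (B \<mu>))(\<nu> := A)) = TS I B Y" by (simp add: Y_def)
  show ?thesis
    unfolding U unfolding eW eF eG mixed_C_HS_def
  proof (intro conjI allI)
    show "finite (PiE I B)" using finI finB by (simp add: finite_PiE)
    show "is_subspace (PiE I B) (TS I B Y)" by (rule TS_subspace[OF Ys])
    show "asc_filt (is_subspace (PiE I B)) (TS I B Y) (\<lambda>k. TS I B (Y(\<tau> := cplx (W \<tau> k))))"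
      by (rule asc_TS[OF tI Ys Yt asc_cplx[OF ff(2)]])
    show "desc_filt (is_subspace (PiE I B)) (TS I B Y) (\<lambda>p. TS I B (Y(\<tau> := F \<tau> p)))"
      by (rule desc_TS[OF tI Ys Yt ff(3)])
    show "desc_filt (is_subspace (PiE I B)) (TS I B Y) (\<lambda>p. TS I B (Y(\<tau> := conj_set (F \<tau> p))))"
      by (rule desc_TS[OF tI Ys Yt desc_conj[OF ff(3)]])
    fix n
    show "hodge_split (TS I B (Y(\<tau> := cplx (W \<tau> n)))) (TS I B (Y(\<tau> := cplx (W \<tau> (n - 1)))))
       (\<lambda>p. TS I B (Y(\<tau> := F \<tau> p))) (\<lambda>p. TS I B (Y(\<tau> := conj_set (F \<tau> p)))) n"
      by (rule HL[OF finI finB tI Ys ff(6) ff(6)]) (use ff in auto)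
  qed
qed

lemma caseB:
  fixes W :: "'i \<Rightarrow> int \<Rightarrow> ('b \<Rightarrow> real) set" and F :: "'i \<Rightarrow> int \<Rightarrow> ('b \<Rightarrow> complex) set"
  assumes finI: "finite I" and finB: "\<forall>\<nu>\<in>I. finite (B \<nu>)" and tI: "\<tau> \<in> I"
    and hsT: "mixed_R_HS (B \<tau>) (W \<tau>) (F \<tau>)"
  shows "mixed_R_HS (PiE I B) (tensor_W I B W \<tau>) (tensor_F I B F \<tau>)"
proof -
  note ff = factor_facts[OF hsT]
  define YR where "YR = (\<lambda>\<mu>. vecs (B \<mu>) :: ('b \<Rightarrow> real) set)"
  define YC where "YC = (\<lambda>\<mu>. vecs (B \<mu>) :: ('b \<Rightarrow> complex) set)"
  have eW: "tensor_W I B W \<tau> = (\<lambda>n. TS I B (YR(\<tau> := W \<tau> n)))"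
    unfolding YR_def by (rule ext, rule tensor_W_TS[where W=W and \<tau>=\<tau>, OF finI finB ff(5)])
  have eF: "tensor_F I B F \<tau> = (\<lambda>p. TS I B (YC(\<tau> := F \<tau> p)))"
    unfolding YC_def by (rule ext, rule tensor_F_TS[where F=F and \<tau>=\<tau>, OF finI finB ff(7)])
  have ecW: "cplx (tensor_W I B W \<tau> n) = TS I B (YC(\<tau> := cplx (W \<tau> n)))" for n
    unfolding YC_def tensor_W_TS[where W=W and \<tau>=\<tau>, OF finI finB ff(5)] cplx_upd ..
  have ecF: "(\<lambda>q. conj_set (tensor_F I B F \<tau> q)) = (\<lambda>q. TS I B (YC(\<tau> := conj_set (F \<tau> q))))"
    unfolding YC_def tensor_F_TS[where F=F and \<tau>=\<tau>, OF finI finB ff(7)] conj_upd ..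
  have vR: "vecs (PiE I B) = TS I B YR" unfolding YR_def TS_full ..
  have vC: "vecs (PiE I B) = TS I B YC" unfolding YC_def TS_full ..
  have YRs: "\<forall>\<mu>\<in>I. is_subspace (B \<mu>) (YR \<mu>)" unfolding YR_def using vecs_subspace by blast
  have YCs: "\<forall>\<mu>\<in>I. is_subspace (B \<mu>) (YC \<mu>)" unfolding YC_def using vecs_subspace by blast
  show ?thesis unfolding mixed_R_HS_def
  proof (intro conjI allI)
    show "finite (PiE I B)" using finI finB by (simp add: finite_PiE)
    show "asc_filt (is_subspace (PiE I B)) (vecs (PiE I B)) (tensor_W I B W \<tau>)"
      unfolding eW vR by (rule asc_TS[OF tI YRs _ ff(2)]) (simp add: YR_def)
    show "desc_filt (is_subspace (PiE I B)) (vecs (PiE I B)) (tensor_F I B F \<tau>)"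
      unfolding eF vC by (rule desc_TS[OF tI YCs _ ff(3)]) (simp add: YC_def)
    fix n
    show "hodge_split (cplx (tensor_W I B W \<tau> n)) (cplx (tensor_W I B W \<tau> (n - 1))) (tensor_F I B F \<tau>)
        (\<lambda>q. conj_set (tensor_F I B F \<tau> q)) n"
      unfolding ecW eF unfolding YC_def conj_upd
      by (rule HL[OF finI finB tI YCs[unfolded YC_def] ff(6) ff(6)]) (use ff in auto)
  qed
qed

theorem proposition6p2:
  fixes I :: "'i set" and B :: "'i \<Rightarrow> 'b set"
    and W :: "'i \<Rightarrow> int \<Rightarrow> ('b \<Rightarrow> real) set" and F :: "'i \<Rightarrow> int \<Rightarrow> ('b \<Rightarrow> complex) set"
  assumes "finite I"
    and "\<forall>\<tau>\<in>I. mixed_R_HS (B \<tau>) (W \<tau>) (F \<tau>)"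
  shows "MHS_box I (PiE I B) (tensor_W I B W) (tensor_F I B F)"
proof -
  have finB: "\<forall>\<nu>\<in>I. finite (B \<nu>)" using assms(2) unfolding mixed_R_HS_def by blast
  show ?thesis unfolding MHS_box_def
  proof (intro conjI ballI impI)
    show "finite (PiE I B)" using assms(1) finB by (simp add: finite_PiE)
    fix \<tau> assume tI: "\<tau> \<in> I"
    show "mixed_R_HS (PiE I B) (tensor_W I B W \<tau>) (tensor_F I B F \<tau>)"
      using caseB[OF assms(1) finB tI] assms(2) tI by blast
  next
    fix \<tau> \<nu> U assume tI: "\<tau> \<in> I" and nI: "\<nu> \<in> I" and tn: "\<tau> \<noteq> \<nu>"
      and U: "U \<in> range (\<lambda>n. cplx (tensor_W I B W \<nu> n)) \<union> range (tensor_F I B F \<nu>)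
         \<union> range (\<lambda>m. conj_set (tensor_F I B F \<nu> m))"
    note ffn = factor_facts[OF assms(2)[rule_format, OF nI]]
    have "\<exists>A. is_subspace (B \<nu>) A \<and> U = TS I B ((\<lambda>\<mu>. vecs (B \<mu>))(\<nu> := A))"
    proof -
      consider (a) n where "U = cplx (tensor_W I B W \<nu> n)" | (b) p where "U = tensor_F I B F \<nu> p"
        | (c) m where "U = conj_set (tensor_F I B F \<nu> m)" using U by blast
      then show ?thesis
      proof cases
        case a then show ?thesis
          using ffn(6)[of n] unfolding tensor_W_TS[where W=W and \<tau>=\<nu>, OF assms(1) finB ffn(5)] cplx_upd by blast
      next
        case b then show ?thesis
          using ffn(7)[of p] unfolding tensor_F_TS[where F=F and \<tau>=\<nu>, OF assms(1) finB ffn(7)] by blast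
      next
        case c then show ?thesis
          using ffn(8)[of m] unfolding tensor_F_TS[where F=F and \<tau>=\<nu>, OF assms(1) finB ffn(7)] conj_upd by blast
      qed
    qed
    then obtain A where A: "is_subspace (B \<nu>) A" "U = TS I B ((\<lambda>\<mu>. vecs (B \<mu>))(\<nu> := A))" by blast
    show "mixed_C_HS (PiE I B) U (\<lambda>k. cplx (tensor_W I B W \<tau> k) \<inter> U) (\<lambda>p. tensor_F I B F \<tau> p \<inter> U)
        (\<lambda>q. conj_set (tensor_F I B F \<tau> q) \<inter> U)"
      unfolding A(2) by (rule caseC[where W=W and F=F and B=B and \<tau>=\<tau> and \<nu>=\<nu>, OF assms(1) finB tI nI tn assms(2)[rule_format, OF tI] A(1)])
  qed
qed

end
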